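(* Let $\Gamma^{\overline k}=\{T\in\mathrm{C}^\times: T\,\mathrm{C}^{\overline k}\,T^{-1}\subseteq\mathrm{C}^{\overline k}\}$ for $k=0,1,2,3$. <ul> <li>If $n\ge4$ and $n\equiv0\pmod 4$: $\mathrm{Q}=\Gamma^{\overline1}=\Gamma^{\overline3}$ and $\mathrm{Q}'=\Gamma^{\overline0}=\Gamma^{\overline2}$, and $\mathrm{Q}\neq\mathrm{Q}'$.</li> <li>If $n\ge4$ and $n\equiv1,2,3\pmod4$: $\mathrm{Q}=\Gamma^{\overline0}=\Gamma^{\overline1}=\Gamma^{\overline2}=\Gamma^{\overline3}$.</li> <li>If $n=2$: $\Gamma^{\overline0}=\mathrm{C}^\times$, and $\Gamma^{\overline1}=\Gamma^{\overline2}=\mathrm{Q}=\mathrm{P}=\mathrm{C}^{\times(0)}\cup\mathrm{C}^{\times(1)}$, and this group is different from $\mathrm{C}^\times$.</li> <li>If $n=3$: $\Gamma^{\overline0}=\Gamma^{\overline3}=\mathrm{C}^\times$, and $\Gamma^{\overline1}=\Gamma^{\overline2}=\mathrm{Q}=\mathrm{P}=\mathrm{Z}^\times\mathrm{C}^{\times(0)}$, and this group is different from $\mathrm{C}^\times$.</li> </ul> Consequently, for all $n\ge2$, $\Gamma^{\overline1}\subseteq\Gamma^{\overline k}$ for $k=0,1,2,3$, and $$\Gamma^{\overline1}=\mathrm{Q}=\{T\in\mathrm{C}^\times:\ T\,\mathrm{C}^{\overline k}\,T^{-1}\subseteq\mathrm{C}^{\overline k}\ \text{for}\ k=0,1,2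,3\}.$$
   Context: Let $\mathrm{C}$ be either the real Clifford algebra $C\ell_{p,q}$ with $p+q=n$, or the complex Clifford algebra $C\ell(\mathbb{C}^n)$, with $n\ge 2$. It has identity $e$ and generators $e_1,\dots,e_n$ satisfying $e_ae_b+e_be_a=2\eta_{ab}e$. In the real case $\eta=\mathrm{diag}(1,\dots,1,-1,\dots,-1)$ with $p$ entries $+1$ and $q$ entries $-1$. In the complex case $\eta=I_n$. $\mathrm{C}^k$ is the grade-$k$ subspace, spanned by the products $e_{a_1}\cdots e_{a_k}$ with $a_1<\dots<a_k$. For $m=0,1,2,3$ let $\mathrm{C}^{\overline m}=\bigoplus_{k\equiv m\pmod4}\mathrm{C}^k$. The even subspace is $\mathrm{C}^{(0)}=\bigoplus_{k\text{ even}}\mathrm{C}^k$ and the odd subspace is $\mathrm{C}^{(1)}=\bigoplus_{k\text{ odd}}\mathrm{C}^k$. The reversion $U\mapsto\tilde U$ is the linear anti-automorphism acting on $\mathrm{C}^k$ as $(-1)^{k(k-1)/2}$. For $S\subseteq\mathrm{C}$, $S^\times$ is the set of elements of $S$ invertible in $\mathrm{C}$, and $\mathrm{C}^{\times(j)}:=(\mathrm{C}^{(j)})^\times$. $\mathrm{Z}$ is the center: $\mathrm{Z}=\mathrm{C}^0$ for $n$ even and $\mathrm{Z}=\mathrm{C}^0\oplus\mathrm{C}^n$ for $n$ odd. Define: <ul> <li>$\mathrm{P}:=\mathrm{Z}^\times(\mathrm{C}^{\times(0)}\cup\mathrm{C}^{\times(1)})=\{WT: W\in\mathrm{Z}^\times,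 T\in\mathrm{C}^{\times(0)}\cup\mathrm{C}^{\times(1)}\}$;</li> <li>$\mathrm{Q}:=\{T\in\mathrm{P}:\tilde TT\in\mathrm{Z}^\times\}$;</li> <li>$\mathrm{Q}':=\{T\in\mathrm{P}:\tilde TT\in(\mathrm{C}^0\oplus\mathrm{C}^n)^\times\}$.</li> </ul> *)

theory Defs
  imports Complex_Main
begin

text \<open>Clifford algebra on generators e_0,...,e_(n-1) over a field of scalars 'a
  (real or complex), with diagonal metric eta (eta i = +1 or -1).
  An element is represented by its coefficient function on blades:
  a function from finite index sets A (subsets of {..<n}) to scalars,
  the blade e_A being the ordered product of the e_i, i in A.\<close>

definition clalg :: "nat \<Rightarrow> (nat set \<Rightarrow> 'a::zero) set" where
  "clalg n = {f. \<forall>A. \<not> A \<subseteq> {..<n} \<longrightarrow> f A = 0}"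

text \<open>Sign/metric factor in e_A e_B = bsign eta A B * e_(A symdiff B).\<close>
definition bsign :: "(nat \<Rightarrow> 'a::comm_ring_1) \<Rightarrow> nat set \<Rightarrow> nat set \<Rightarrow> 'a" where
  "bsign eta A B = (-1) ^ card {(a, b). a \<in> A \<and> b \<in> B \<and> b < a} * (\<Prod>i\<in>A \<inter> B. eta i)"

definition clmul :: "nat \<Rightarrow> (nat \<Rightarrow> 'a::comm_ring_1) \<Rightarrow> (nat set \<Rightarrow> 'a) \<Rightarrow> (nat set \<Rightarrow> 'a) \<Rightarrow> (nat set \<Rightarrow> 'a)" where
  "clmul n eta f g = (\<lambda>C. \<Sum>A\<in>Pow {..<n}. \<Sum>B\<in>Pow {..<n}.
      if (A - B) \<union> (B - A) = C then bsign eta A B * f A * g B else 0)"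

definition clone :: "nat set \<Rightarrow> 'a::{zero,one}" where
  "clone = (\<lambda>A. if A = {} then 1 else 0)"

definition clunits :: "nat \<Rightarrow> (nat \<Rightarrow> 'a::comm_ring_1) \<Rightarrow> (nat set \<Rightarrow> 'a) set \<Rightarrow> (nat set \<Rightarrow> 'a) set" where
  "clunits n eta S = {T \<in> S. T \<in> clalg n \<and> (\<exists>U\<in>clalg n. clmul n eta T U = clone \<and> clmul n eta U T = clone)}"

definition clinv :: "nat \<Rightarrow> (nat \<Rightarrow> 'a::comm_ring_1) \<Rightarrow> (nat set \<Rightarrow> 'a) \<Rightarrow> (nat set \<Rightarrow> 'a)" where
  "clinv n eta T = (THE U. U \<in> clalg n \<and> clmul n eta T U = clone \<and> clmul n eta U T = clone)"

definition grade :: "nat \<Rightarrow> nat \<Rightarrow> (nat set \<Rightarrow> 'a::zero) set" where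
  "grade n k = {f \<in> clalg n. \<forall>A. card A \<noteq> k \<longrightarrow> f A = 0}"

definition grmod4 :: "nat \<Rightarrow> nat \<Rightarrow> (nat set \<Rightarrow> 'a::zero) set" where
  "grmod4 n m = {f \<in> clalg n. \<forall>A. card A mod 4 \<noteq> m \<longrightarrow> f A = 0}"

definition cleven :: "nat \<Rightarrow> (nat set \<Rightarrow> 'a::zero) set" where
  "cleven n = {f \<in> clalg n. \<forall>A. odd (card A) \<longrightarrow> f A = 0}"

definition clodd :: "nat \<Rightarrow> (nat set \<Rightarrow> 'a::zero) set" where
  "clodd n = {f \<in> clalg n. \<forall>A. even (card A) \<longrightarrow> f A = 0}"

definition ssum :: "(nat set \<Rightarrow> 'a::plus) set \<Rightarrow> (nat set \<Rightarrow> 'a) set \<Rightarrow> (nat set \<Rightarrow> 'a) set" where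
  "ssum S T = {(\<lambda>A. x A + y A) | x y. x \<in> S \<and> y \<in> T}"

definition clcenter :: "nat \<Rightarrow> (nat set \<Rightarrow> 'a::{zero,plus}) set" where
  "clcenter n = (if even n then grade n 0 else ssum (grade n 0) (grade n n))"

definition clrev :: "(nat set \<Rightarrow> 'a::comm_ring_1) \<Rightarrow> (nat set \<Rightarrow> 'a)" where
  "clrev f = (\<lambda>A. (-1) ^ (card A * (card A - 1) div 2) * f A)"

definition setP :: "nat \<Rightarrow> (nat \<Rightarrow> 'a::comm_ring_1) \<Rightarrow> (nat set \<Rightarrow> 'a) set" where
  "setP n eta = {clmul n eta W T | W T. W \<in> clunits n eta (clcenter n) \<and>
                   T \<in> clunits n eta (cleven n) \<union> clunits n eta (clodd n)}"

definition setQ :: "nat \<Rightarrow> (nat \<Rightarrow> 'a::comm_ring_1) \<Rightarrow> (nat set \<Rightarrow> 'a) set" where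
  "setQ n eta = {T \<in> setP n eta. clmul n eta (clrev T) T \<in> clunits n eta (clcenter n)}"

definition setQ' :: "nat \<Rightarrow> (nat \<Rightarrow> 'a::comm_ring_1) \<Rightarrow> (nat set \<Rightarrow> 'a) set" where
  "setQ' n eta = {T \<in> setP n eta. clmul n eta (clrev T) T \<in> clunits n eta (ssum (grade n 0) (grade n n))}"

definition Gamma :: "nat \<Rightarrow> (nat \<Rightarrow> 'a::comm_ring_1) \<Rightarrow> nat \<Rightarrow> (nat set \<Rightarrow> 'a) set" where
  "Gamma n eta k = {T \<in> clunits n eta (clalg n). \<forall>X \<in> grmod4 n k.
       clmul n eta (clmul n eta T X) (clinv n eta T) \<in> grmod4 n k}"

definition gamma_claims :: "nat \<Rightarrow> (nat \<Rightarrow> 'a::comm_ring_1) \<Rightarrow> bool" where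
  "gamma_claims n eta \<longleftrightarrow>
    (n \<ge> 4 \<and> n mod 4 = 0 \<longrightarrow>
       setQ n eta = Gamma n eta 1 \<and> Gamma n eta 1 = Gamma n eta 3 \<and>
       setQ' n eta = Gamma n eta 0 \<and> Gamma n eta 0 = Gamma n eta 2 \<and>
       setQ n eta \<noteq> setQ' n eta) \<and>
    (n \<ge> 4 \<and> n mod 4 \<in> {1, 2, 3} \<longrightarrow>
       setQ n eta = Gamma n eta 0 \<and> Gamma n eta 0 = Gamma n eta 1 \<and>
       Gamma n eta 1 = Gamma n eta 2 \<and> Gamma n eta 2 = Gamma n eta 3) \<and>
    (n = 2 \<longrightarrow>
       Gamma n eta 0 = clunits n eta (clalg n) \<and>
       Gamma n eta 1 = Gamma n eta 2 \<and> Gamma n eta 2 = setQ n eta \<and>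
       setQ n eta = setP n eta \<and>
       setP n eta = clunits n eta (cleven n) \<union> clunits n eta (clodd n) \<and>
       clunits n eta (cleven n) \<union> clunits n eta (clodd n) \<noteq> clunits n eta (clalg n)) \<and>
    (n = 3 \<longrightarrow>
       Gamma n eta 0 = clunits n eta (clalg n) \<and> Gamma n eta 3 = clunits n eta (clalg n) \<and>
       Gamma n eta 1 = Gamma n eta 2 \<and> Gamma n eta 2 = setQ n eta \<and>
       setQ n eta = setP n eta \<and>
       setP n eta = {clmul n eta W T | W T. W \<in> clunits n eta (clcenter n) \<and> T \<in> clunits n eta (cleven n)} \<and>
       {clmul n eta W T | W T. W \<in> clunits n eta (clcenter n) \<and> T \<in> clunits n eta (cleven n)}
          \<noteq> clunits n eta (clalg n)) \<and>
    (n \<ge> 2 \<longrightarrow>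
       (\<forall>k\<in>{0, 1, 2, 3}. Gamma n eta 1 \<subseteq> Gamma n eta k) \<and>
       Gamma n eta 1 = setQ n eta \<and>
       setQ n eta = {T \<in> clunits n eta (clalg n). \<forall>k\<in>{0, 1, 2, 3}. \<forall>X \<in> grmod4 n k.
           clmul n eta (clmul n eta T X) (clinv n eta T) \<in> grmod4 n k})"

definition sig_pq :: "nat \<Rightarrow> nat \<Rightarrow> real" where
  "sig_pq p i = (if i < p then 1 else -1)"

end

theory Submission
  imports Defs
begin

abbreviation sd :: "'b set \<Rightarrow> 'b set \<Rightarrow> 'b set" where "sd A B \<equiv> (A - B) \<union> (B - A)"

definition pairs :: "nat set \<Rightarrow> nat set \<Rightarrow> (nat \<times> nat) set" where
  "pairs A B = {(a, b). a \<in> A \<and> b \<in> B \<and> b < a}"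

lemma finite_pairs[simp]: "finite A \<Longrightarrow> finite B \<Longrightarrow> finite (pairs A B)"
  by (rule finite_subset[of _ "A \<times> B"]) (auto simp: pairs_def)

lemma pairs_sd1: "pairs (sd X Y) D = sd (pairs X D) (pairs Y D)"
  by (auto simp: pairs_def)
lemma pairs_sd2: "pairs A (sd Y Z) = sd (pairs A Y) (pairs A Z)"
  by (auto simp: pairs_def)

lemma sg_sd:
  assumes "finite S" "finite T"
  shows "(-1::'a::comm_ring_1) ^ card (sd S T) = (-1) ^ card S * (-1) ^ card T"
proof -
  have 1: "card S = card (S - T) + card (S \<inter> T)"
    using card_Int_Diff[OF assms(1), of T] by simp
  have 2: "card T = card (T - S) + card (S \<inter> T)"
    using card_Int_Diff[OF assms(2), of S] by (simp add: Int_commute)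
  have 3: "card (sd S T) = card (S - T) + card (T - S)"
    using assms by (intro card_Un_disjoint) auto
  have "(-1::'a) ^ card S * (-1) ^ card T = (-1) ^ card (sd S T) * ((-1) ^ card (S \<inter> T))\<^sup>2"
    unfolding 1 2 3 by (simp add: power_add power2_eq_square algebra_simps)
  also have "((-1::'a) ^ card (S \<inter> T))\<^sup>2 = 1"
    by (simp add: power_mult[symmetric] mult.commute[of _ 2] power_mult)
  finally show ?thesis by simp
qed

lemma bsign_alt: "bsign eta A B = (-1) ^ card (pairs A B) * (\<Prod>i\<in>A \<inter> B. eta i)"
  by (simp add: bsign_def pairs_def)

locale clf =
  fixes n :: nat and eta :: "nat \<Rightarrow> 'a::field_char_0"
  assumes eta_sq: "\<And>i. eta i * eta i = 1"
begin

definition pe :: "nat set \<Rightarrow> 'a" where "pe X = (\<Prod>i\<in>X. eta i)"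

lemma pe_sq: "pe X * pe X = 1"
  unfolding pe_def prod.distrib[symmetric] by (simp add: eta_sq)

lemma pe_sd: assumes "finite X" "finite Y" shows "pe (sd X Y) = pe X * pe Y"
proof -
  have a: "pe X = pe (X \<inter> Y) * pe (X - Y)" unfolding pe_def by (rule prod.Int_Diff[OF assms(1)])
  have b: "pe Y = pe (X \<inter> Y) * pe (Y - X)" unfolding pe_def using assms
    by (subst prod.Int_Diff[OF assms(2), of _ X]) (simp add: Int_commute)
  have c: "pe (sd X Y) = pe (X - Y) * pe (Y - X)" unfolding pe_def using assms
    by (intro prod.union_disjoint) auto
  show ?thesis unfolding a b c using pe_sq[of "X \<inter> Y"]
    by (simp add: algebra_simps)
qed

lemma bsign_pe: "bsign eta A B = (-1) ^ card (pairs A B) * pe (A \<inter> B)"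
  by (simp add: bsign_alt pe_def)

lemma cocycle:
  assumes "finite A" "finite B" "finite D"
  shows "bsign eta A B * bsign eta (sd A B) D = bsign eta A (sd B D) * bsign eta B D"
proof -
  have s1: "(-1::'a) ^ card (pairs (sd A B) D) = (-1) ^ card (pairs A D) * (-1) ^ card (pairs B D)"
    unfolding pairs_sd1 using assms by (intro sg_sd) auto
  have s2: "(-1::'a) ^ card (pairs A (sd B D)) = (-1) ^ card (pairs A B) * (-1) ^ card (pairs A D)"
    unfolding pairs_sd2 using assms by (intro sg_sd) auto
  have e1: "pe (sd A B \<inter> D) = pe (A \<inter> D) * pe (B \<inter> D)"
  proof -
    have "sd A B \<inter> D = sd (A \<inter> D) (B \<inter> D)" by auto
    thus ?thesis using assms pe_sd by auto
  qed
  have e2: "pe (A \<inter> sd B D) = pe (A \<inter> B) * pe (A \<inter> D)"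
  proof -
    have "A \<inter> sd B D = sd (A \<inter> B) (A \<inter> D)" by auto
    thus ?thesis using assms pe_sd by auto
  qed
  show ?thesis unfolding bsign_pe s1 s2 e1 e2 by (simp add: algebra_simps)
qed

end

lemma swap3: "(\<Sum>x\<in>S. \<Sum>y\<in>T. \<Sum>z\<in>U. f x y z) = (\<Sum>y\<in>T. \<Sum>z\<in>U. \<Sum>x\<in>S. f x y z)"
proof -
  have "(\<Sum>x\<in>S. \<Sum>y\<in>T. \<Sum>z\<in>U. f x y z) = (\<Sum>y\<in>T. \<Sum>x\<in>S. \<Sum>z\<in>U. f x y z)"
    by (rule sum.swap)
  also have "\<dots> = (\<Sum>y\<in>T. \<Sum>z\<in>U. \<Sum>x\<in>S. f x y z)"
    by (rule sum.cong[OF refl]) (rule sum.swap)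
  finally show ?thesis .
qed

context clf begin

abbreviation mul (infixl "\<odot>" 70) where "x \<odot> y \<equiv> clmul n eta x y"
abbreviation PP where "PP \<equiv> Pow {..<n}"

lemma finite_PP[simp]: "finite PP" by simp

lemma mul_apply: "(f \<odot> g) C = (\<Sum>A\<in>PP. \<Sum>B\<in>PP. if sd A B = C then bsign eta A B * f A * g B else 0)"
  by (simp add: clmul_def)

lemma sd_PP: "A \<in> PP \<Longrightarrow> B \<in> PP \<Longrightarrow> sd A B \<in> PP" by auto

lemma mul_assoc_l:
  "((f \<odot> g) \<odot> h) C = (\<Sum>A\<in>PP. \<Sum>B\<in>PP. \<Sum>D\<in>PP. if sd (sd A B) D = C then
      bsign eta A B * bsign eta (sd A B) D * f A * g B * h D else 0)"
proof -
  have "((f \<odot> g) \<odot> h) C = (\<Sum>X\<in>PP. \<Sum>D\<in>PP. \<Sum>A\<in>PP. \<Sum>B\<in>PP.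
     if sd A B = X \<and> sd X D = C then bsign eta A B * bsign eta X D * f A * g B * h D else 0)"
    unfolding mul_apply
    by (intro sum.cong refl) (auto simp: sum_distrib_left sum_distrib_right if_distrib if_distribR algebra_simps intro!: sum.cong)
  also have "\<dots> = (\<Sum>D\<in>PP. \<Sum>X\<in>PP. \<Sum>A\<in>PP. \<Sum>B\<in>PP.
     if sd A B = X \<and> sd X D = C then bsign eta A B * bsign eta X D * f A * g B * h D else 0)"
    by (rule sum.swap)
  also have "\<dots> = (\<Sum>D\<in>PP. \<Sum>A\<in>PP. \<Sum>B\<in>PP. \<Sum>X\<in>PP.
     if sd A B = X \<and> sd X D = C then bsign eta A B * bsign eta X D * f A * g B * h D else 0)"
    by (rule sum.cong[OF refl]) (rule swap3)
  also have "\<dots> = (\<Sum>D\<in>PP. \<Sum>A\<in>PP. \<Sum>B\<in>PP.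
     if sd (sd A B) D = C then bsign eta A B * bsign eta (sd A B) D * f A * g B * h D else 0)"
  proof (intro sum.cong refl)
    fix D A B assume "A \<in> PP" "B \<in> PP"
    hence m: "sd A B \<in> PP" by auto
    show "(\<Sum>X\<in>PP. if sd A B = X \<and> sd X D = C then bsign eta A B * bsign eta X D * f A * g B * h D else 0)
       = (if sd (sd A B) D = C then bsign eta A B * bsign eta (sd A B) D * f A * g B * h D else 0)"
    proof -
      have "(\<Sum>X\<in>PP. if sd A B = X \<and> sd X D = C then bsign eta A B * bsign eta X D * f A * g B * h D else 0)
        = (\<Sum>X\<in>PP. if X = sd A B then (if sd (sd A B) D = C then bsign eta A B * bsign eta (sd A B) D * f A * g B * h D else 0) else 0)"
        by (rule sum.cong) auto
      also have "\<dots> = (if sd (sd A B) D = C then bsign eta A B * bsign eta (sd A B) D * f A * g B * h D else 0)"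
        using m by (subst sum.delta) auto
      finally show ?thesis .
    qed
  qed
  also have "\<dots> = (\<Sum>A\<in>PP. \<Sum>B\<in>PP. \<Sum>D\<in>PP.
     if sd (sd A B) D = C then bsign eta A B * bsign eta (sd A B) D * f A * g B * h D else 0)"
    by (rule swap3)
  finally show ?thesis .
qed

lemma mul_assoc_r:
  "(f \<odot> (g \<odot> h)) C = (\<Sum>A\<in>PP. \<Sum>B\<in>PP. \<Sum>D\<in>PP. if sd A (sd B D) = C then
      bsign eta A (sd B D) * bsign eta B D * f A * g B * h D else 0)"
proof -
  have "(f \<odot> (g \<odot> h)) C = (\<Sum>A\<in>PP. \<Sum>Y\<in>PP. \<Sum>B\<in>PP. \<Sum>D\<in>PP.
     if sd B D = Y \<and> sd A Y = C then bsign eta A Y * bsign eta B D * f A * g B * h D else 0)"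
    unfolding mul_apply
    by (intro sum.cong refl) (auto simp: sum_distrib_left sum_distrib_right if_distrib if_distribR algebra_simps intro!: sum.cong)
  also have "\<dots> = (\<Sum>A\<in>PP. \<Sum>B\<in>PP. \<Sum>D\<in>PP. \<Sum>Y\<in>PP.
     if sd B D = Y \<and> sd A Y = C then bsign eta A Y * bsign eta B D * f A * g B * h D else 0)"
    by (rule sum.cong[OF refl]) (rule swap3)
  also have "\<dots> = (\<Sum>A\<in>PP. \<Sum>B\<in>PP. \<Sum>D\<in>PP.
     if sd A (sd B D) = C then bsign eta A (sd B D) * bsign eta B D * f A * g B * h D else 0)"
  proof (intro sum.cong refl)
    fix D A B assume "B \<in> PP" "D \<in> PP"
    hence m: "sd B D \<in> PP" by auto
    have "(\<Sum>Y\<in>PP. if sd B D = Y \<and> sd A Y = C then bsign eta A Y * bsign eta B D * f A * g B * h D else 0)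
        = (\<Sum>Y\<in>PP. if Y = sd B D then (if sd A (sd B D) = C then bsign eta A (sd B D) * bsign eta B D * f A * g B * h D else 0) else 0)"
      by (rule sum.cong) auto
    also have "\<dots> = (if sd A (sd B D) = C then bsign eta A (sd B D) * bsign eta B D * f A * g B * h D else 0)"
      using m by (subst sum.delta) auto
    finally show "(\<Sum>Y\<in>PP. if sd B D = Y \<and> sd A Y = C then bsign eta A Y * bsign eta B D * f A * g B * h D else 0)
        = (if sd A (sd B D) = C then bsign eta A (sd B D) * bsign eta B D * f A * g B * h D else 0)" .
  qed
  finally show ?thesis .
qed

lemma mul_assoc: "(f \<odot> g) \<odot> h = f \<odot> (g \<odot> h)"
proof
  fix C
  show "((f \<odot> g) \<odot> h) C = (f \<odot> (g \<odot> h)) C"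
    unfolding mul_assoc_l mul_assoc_r
  proof (intro sum.cong refl)
    fix A B D assume "A \<in> PP" "B \<in> PP" "D \<in> PP"
    hence f: "finite A" "finite B" "finite D" by (auto intro: finite_subset)
    have e: "sd (sd A B) D = sd A (sd B D)" by auto
    show "(if sd (sd A B) D = C then bsign eta A B * bsign eta (sd A B) D * f A * g B * h D else 0) =
          (if sd A (sd B D) = C then bsign eta A (sd B D) * bsign eta B D * f A * g B * h D else 0)"
      unfolding e using cocycle[OF f] by simp
  qed
qed

end

definition fadd :: "(nat set \<Rightarrow> 'a::comm_ring_1) \<Rightarrow> (nat set \<Rightarrow> 'a) \<Rightarrow> (nat set \<Rightarrow> 'a)" (infixl "\<oplus>" 65)
  where "f \<oplus> g = (\<lambda>A. f A + g A)"
definition fsc :: "'a::comm_ring_1 \<Rightarrow> (nat set \<Rightarrow> 'a) \<Rightarrow> (nat set \<Rightarrow> 'a)"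
  where "fsc c f = (\<lambda>A. c * f A)"
definition bl :: "nat set \<Rightarrow> nat set \<Rightarrow> 'a::comm_ring_1" where "bl B = (\<lambda>C. if C = B then 1 else 0)"

lemma fadd_apply[simp]: "(f \<oplus> g) A = f A + g A" by (simp add: fadd_def)
lemma fsc_apply[simp]: "fsc c f A = c * f A" by (simp add: fsc_def)
lemma bl_apply: "bl B A = (if A = B then 1 else 0)" by (simp add: bl_def)
lemma clone_bl: "clone = bl {}" by (simp add: clone_def bl_def fun_eq_iff)

lemma sd_eq_iff1: "(sd A B = C) = (B = sd C A)" by blast
lemma sd_eq_iff2: "(sd A B = C) = (A = sd C B)" by blast

context clf begin

lemma mul_clalg[simp]: "f \<odot> g \<in> clalg n"
  unfolding clalg_def by (auto simp: mul_apply intro!: sum.neutral)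

lemma mul_bl_right:
  assumes "B \<in> PP"
  shows "(f \<odot> bl B) C = (if C \<in> PP then bsign eta (sd C B) B * f (sd C B) else 0)"
proof -
  have "(f \<odot> bl B) C = (\<Sum>A\<in>PP. if A = sd C B then bsign eta A B * f A else 0)"
    unfolding mul_apply
  proof (rule sum.cong[OF refl])
    fix A assume A: "A \<in> PP"
    have "(\<Sum>B'\<in>PP. if sd A B' = C then bsign eta A B' * f A * bl B B' else 0)
        = (\<Sum>B'\<in>PP. if B' = B then (if A = sd C B then bsign eta A B * f A else 0) else 0)"
      by (rule sum.cong) (auto simp: bl_apply)
    also have "\<dots> = (if A = sd C B then bsign eta A B * f A else 0)" using assms by simp
    finally show "(\<Sum>B'\<in>PP. if sd A B' = C then bsign eta A B' * f A * bl B B' else 0) = \<dots>" .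
  qed
  also have "\<dots> = (if sd C B \<in> PP then bsign eta (sd C B) B * f (sd C B) else 0)"
    by (rule sum.delta[OF finite_PP])
  also have "(sd C B \<in> PP) = (C \<in> PP)" using assms by auto
  finally show ?thesis .
qed

lemma mul_bl_left:
  assumes "B \<in> PP"
  shows "(bl B \<odot> f) C = (if C \<in> PP then bsign eta B (sd C B) * f (sd C B) else 0)"
proof -
  have "(bl B \<odot> f) C = (\<Sum>B'\<in>PP. if B' = sd C B then bsign eta B B' * f B' else 0)"
    unfolding mul_apply
    apply (subst sum.swap)
  proof (rule sum.cong[OF refl])
    fix B' assume "B' \<in> PP"
    have "(\<Sum>A\<in>PP. if sd A B' = C then bsign eta A B' * bl B A * f B' else 0)
      = (\<Sum>A\<in>PP. if A = B then (if B' = sd C B then bsign eta B B' * f B' else 0) else 0)"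
      by (rule sum.cong) (auto simp: bl_apply)
    also have "\<dots> = (if B' = sd C B then bsign eta B B' * f B' else 0)" using assms by simp
    finally show "(\<Sum>A\<in>PP. if sd A B' = C then bsign eta A B' * bl B A * f B' else 0) = \<dots>" .
  qed
  also have "\<dots> = (if sd C B \<in> PP then bsign eta B (sd C B) * f (sd C B) else 0)"
    by (rule sum.delta[OF finite_PP])
  also have "(sd C B \<in> PP) = (C \<in> PP)" using assms by auto
  finally show ?thesis .
qed

lemma bsign_empty1[simp]: "bsign eta {} B = 1" by (simp add: bsign_def)
lemma bsign_empty2[simp]: "bsign eta B {} = 1" by (simp add: bsign_def)

lemma clalg_out: "f \<in> clalg n \<Longrightarrow> C \<notin> PP \<Longrightarrow> f C = 0"
  by (auto simp: clalg_def)

lemma one_left[simp]: "f \<in> clalg n \<Longrightarrow> clone \<odot> f = f"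
  unfolding clone_bl by (rule ext) (auto simp: mul_bl_left clalg_out)
lemma one_right[simp]: "f \<in> clalg n \<Longrightarrow> f \<odot> clone = f"
  unfolding clone_bl by (rule ext) (auto simp: mul_bl_right clalg_out)

lemma clone_clalg[simp]: "clone \<in> clalg n" by (auto simp: clalg_def clone_def)
lemma bl_clalg[simp]: "B \<in> PP \<Longrightarrow> bl B \<in> clalg n" by (auto simp: clalg_def bl_def)
lemma fadd_clalg[simp]: "f \<in> clalg n \<Longrightarrow> g \<in> clalg n \<Longrightarrow> f \<oplus> g \<in> clalg n" by (auto simp: clalg_def)
lemma fsc_clalg[simp]: "f \<in> clalg n \<Longrightarrow> fsc c f \<in> clalg n" by (auto simp: clalg_def)

lemma mul_add_left: "(f \<oplus> g) \<odot> h = (f \<odot> h) \<oplus> (g \<odot> h)"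
  by (rule ext) (simp add: mul_apply sum.distrib[symmetric] algebra_simps if_distrib cong: if_cong)
lemma mul_add_right: "h \<odot> (f \<oplus> g) = (h \<odot> f) \<oplus> (h \<odot> g)"
  by (rule ext) (simp add: mul_apply sum.distrib[symmetric] algebra_simps if_distrib cong: if_cong)
lemma mul_sc_left: "fsc c f \<odot> g = fsc c (f \<odot> g)"
  by (rule ext) (simp add: mul_apply sum_distrib_left algebra_simps if_distrib cong: if_cong)
lemma mul_sc_right: "g \<odot> fsc c f = fsc c (g \<odot> f)"
  by (rule ext) (simp add: mul_apply sum_distrib_left algebra_simps if_distrib cong: if_cong)

lemma bl_mul_bl: "A \<in> PP \<Longrightarrow> B \<in> PP \<Longrightarrow> bl A \<odot> bl B = fsc (bsign eta A B) (bl (sd A B))"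
  by (rule ext) (auto simp: mul_bl_right bl_apply)

end

definition galpha :: "(nat set \<Rightarrow> 'a::comm_ring_1) \<Rightarrow> (nat set \<Rightarrow> 'a)" where
  "galpha f = (\<lambda>A. (-1) ^ card A * f A)"

lemma sgsq: "((-1::'a::comm_ring_1) ^ k) * (-1) ^ k = 1"
  by (simp add: power_add[symmetric])

lemma pairs_count:
  assumes "finite A" "finite B"
  shows "card (pairs A B) + card (pairs B A) + card (A \<inter> B) = card A * card B"
proof -
  have e: "A \<times> B = pairs A B \<union> (prod.swap ` pairs B A) \<union> ((\<lambda>x. (x, x)) ` (A \<inter> B))"
    by (auto simp: pairs_def image_iff)
  have f1: "finite (pairs A B)" "finite (prod.swap ` pairs B A)" "finite ((\<lambda>x. (x, x)) ` (A \<inter> B))"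
    using assms by auto
  have "card (A \<times> B) = card (pairs A B \<union> (prod.swap ` pairs B A)) + card ((\<lambda>x. (x, x)) ` (A \<inter> B))"
    unfolding e using f1 by (intro card_Un_disjoint) (auto simp: pairs_def)
  also have "card (pairs A B \<union> (prod.swap ` pairs B A)) = card (pairs A B) + card (prod.swap ` pairs B A)"
    using f1 by (intro card_Un_disjoint) (auto simp: pairs_def)
  also have "card (prod.swap ` pairs B A) = card (pairs B A)"
    by (rule card_image) (auto simp: inj_on_def)
  also have "card ((\<lambda>x. (x, x)) ` (A \<inter> B)) = card (A \<inter> B)"
    by (rule card_image) (simp add: inj_on_def)
  finally show ?thesis by (simp add: card_cartesian_product)
qed

lemma card_pairs_self: "finite A \<Longrightarrow> card A * (card A - 1) div 2 = card (pairs A A)"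
proof -
  assume f: "finite A"
  have "2 * card (pairs A A) + card A = card A * card A" using pairs_count[OF f f] by simp
  hence "card A * (card A - 1) = 2 * card (pairs A A)"
    by (simp add: diff_mult_distrib2)
  thus ?thesis by simp
qed

lemma clrev_pairs: assumes "finite A" shows "clrev f A = (-1) ^ card (pairs A A) * f A"
  unfolding clrev_def card_pairs_self[OF assms] ..

context clf begin

lemma galpha_mul: "galpha (f \<odot> g) = galpha f \<odot> galpha g"
proof
  fix C
  show "galpha (f \<odot> g) C = (galpha f \<odot> galpha g) C"
    unfolding galpha_def mul_apply sum_distrib_left
  proof (intro sum.cong refl)
    fix A B assume "A \<in> PP" "B \<in> PP"
    hence f: "finite A" "finite B" by (auto intro: finite_subset)
    show "(-1) ^ card C * (if sd A B = C then bsign eta A B * f A * g B else 0) =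
       (if sd A B = C then bsign eta A B * ((-1) ^ card A * f A) * ((-1) ^ card B * g B) else 0)"
      using sg_sd[OF f, where 'a='a] by (auto simp: algebra_simps)
  qed
qed

lemma bsign_swap:
  assumes "finite A" "finite B"
  shows "bsign eta B A = (-1) ^ (card A * card B + card (A \<inter> B)) * bsign eta A B"
proof -
  have "(-1::'a) ^ (card A * card B + card (A \<inter> B)) = (-1) ^ (card (pairs A B) + card (pairs B A) + 2 * card (A \<inter> B))"
  proof -
    have "card A * card B + card (A \<inter> B) = card (pairs A B) + card (pairs B A) + 2 * card (A \<inter> B)"
      using pairs_count[OF assms] by linarith
    thus ?thesis by (simp only:)
  qed
  also have "\<dots> = (-1) ^ card (pairs A B) * (-1) ^ card (pairs B A)"
    by (simp add: power_add power_mult)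
  finally have e: "(-1::'a) ^ (card A * card B + card (A \<inter> B)) = (-1) ^ card (pairs A B) * (-1) ^ card (pairs B A)" .
  show ?thesis unfolding bsign_pe e
    by (simp add: Int_commute algebra_simps)
qed

lemma rev_bsign:
  assumes "finite A" "finite B"
  shows "(-1) ^ card (pairs (sd A B) (sd A B)) * bsign eta A B
       = bsign eta B A * (-1) ^ card (pairs B B) * (-1) ^ card (pairs A A)"
proof -
  have fs: "finite (pairs X Y)" if "X \<in> {A, B}" "Y \<in> {A, B}" for X Y using assms that by auto
  have "pairs (sd A B) (sd A B) = sd (sd (pairs A A) (pairs A B)) (sd (pairs B A) (pairs B B))"
    by (auto simp: pairs_sd1 pairs_sd2)
  hence "(-1::'a) ^ card (pairs (sd A B) (sd A B)) =
     (-1) ^ card (pairs A A) * (-1) ^ card (pairs A B) * ((-1) ^ card (pairs B A) * (-1) ^ card (pairs B B))"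
    using assms by (simp add: sg_sd)
  thus ?thesis unfolding bsign_pe using sgsq[of "card (pairs A B)", where 'a='a]
    by (simp add: Int_commute algebra_simps)
qed

lemma clrev_mul: "clrev (f \<odot> g) = clrev g \<odot> clrev f"
proof
  fix C
  show "clrev (f \<odot> g) C = (clrev g \<odot> clrev f) C"
  proof (cases "C \<in> PP")
    case False
    then show ?thesis using mul_clalg[of f g] mul_clalg[of "clrev g" "clrev f"]
      by (simp add: clrev_def clalg_out)
  next
    case True
    hence fC: "finite C" by (auto intro: finite_subset)
    have "(clrev g \<odot> clrev f) C = (\<Sum>B\<in>PP. \<Sum>A\<in>PP. if sd A B = C then
        bsign eta B A * ((-1) ^ card (pairs B B) * g B) * ((-1) ^ card (pairs A A) * f A) else 0)"
      unfolding mul_apply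
    proof (intro sum.cong refl)
      fix A B assume "A \<in> PP" "B \<in> PP"
      hence f: "finite A" "finite B" by (auto intro: finite_subset)
      show "(if sd B A = C then bsign eta B A * clrev g B * clrev f A else 0) =
         (if sd A B = C then bsign eta B A * ((-1) ^ card (pairs B B) * g B) * ((-1) ^ card (pairs A A) * f A) else 0)"
        using f by (simp add: clrev_pairs Un_commute)
    qed
    also have "\<dots> = (\<Sum>A\<in>PP. \<Sum>B\<in>PP. if sd A B = C then
        bsign eta B A * ((-1) ^ card (pairs B B) * g B) * ((-1) ^ card (pairs A A) * f A) else 0)"
      by (rule sum.swap)
    also have "\<dots> = clrev (f \<odot> g) C"
      unfolding clrev_pairs[OF fC] mul_apply sum_distrib_left
    proof (intro sum.cong refl)
      fix A B assume "A \<in> PP" "B \<in> PP"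
      hence f: "finite A" "finite B" by (auto intro: finite_subset)
      show "(if sd A B = C then bsign eta B A * ((-1) ^ card (pairs B B) * g B) * ((-1) ^ card (pairs A A) * f A) else 0)
        = (-1) ^ card (pairs C C) * (if sd A B = C then bsign eta A B * f A * g B else 0)"
        using rev_bsign[OF f] by (auto simp: algebra_simps)
    qed
    finally show ?thesis by simp
  qed
qed

end

lemma parity4:
  fixes p m :: nat
  assumes "2 * p + m = m * m"
  shows "even p \<longleftrightarrow> m mod 4 < 2"
proof -
  obtain q t where m: "m = 4 * q + t" and t: "t < 4" by (metis div_mult_mod_eq mod_less_divisor zero_less_numeral mult.commute)
  obtain Q where Q: "Q = q * q" by simp
  have "m * m = 16 * Q + 8 * t * q + t * t" unfolding m Q by (simp add: algebra_simps)
  with assms have e: "2 * p + 4 * q + t = 16 * Q + 8 * t * q + t * t" unfolding m by simp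
  have mm: "m mod 4 = t" using m t by simp
  from t have "t = 0 \<or> t = 1 \<or> t = 2 \<or> t = 3" by auto
  thus ?thesis using e unfolding mm by (elim disjE) (simp, presburger)+
qed

definition eps4 :: "nat \<Rightarrow> 'a::comm_ring_1" where "eps4 k = (if k mod 4 < 2 then 1 else -1)"

lemma sign_pairs_self: "finite A \<Longrightarrow> (-1::'a::comm_ring_1) ^ card (pairs A A) = eps4 (card A)"
proof -
  assume f: "finite A"
  have "2 * card (pairs A A) + card A = card A * card A" using pairs_count[OF f f] by simp
  from parity4[OF this] show ?thesis by (auto simp: eps4_def)
qed

lemma clrev_eps: "finite A \<Longrightarrow> clrev f A = eps4 (card A) * f A"
  by (simp add: clrev_pairs sign_pairs_self)

lemma neg1_pow_eq_iff: "((-1::'a::{comm_ring_1,ring_char_0}) ^ a = (-1) ^ b) \<longleftrightarrow> (even a \<longleftrightarrow> even b)"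
  by (cases "even a"; cases "even b") auto

lemma eps4_sq[simp]: "eps4 k * eps4 k = (1::'a::comm_ring_1)" by (simp add: eps4_def)

definition zf :: "nat set \<Rightarrow> 'a::zero" where "zf = (\<lambda>_. 0)"
definition ep :: "(nat set \<Rightarrow> 'a::zero) \<Rightarrow> nat set \<Rightarrow> 'a" where "ep f = (\<lambda>A. if even (card A) then f A else 0)"
definition op :: "(nat set \<Rightarrow> 'a::zero) \<Rightarrow> nat set \<Rightarrow> 'a" where "op f = (\<lambda>A. if odd (card A) then f A else 0)"

lemma ep_op: "f = ep f \<oplus> op f" by (rule ext) (simp add: ep_def op_def)

context clf begin

lemma mul_zf_right[simp]: "f \<odot> zf = zf" by (rule ext) (simp add: mul_apply zf_def cong: if_cong)
lemma mul_zf_left[simp]: "zf \<odot> f = zf" by (rule ext) (simp add: mul_apply zf_def cong: if_cong)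
lemma zf_clalg[simp]: "zf \<in> clalg n" by (simp add: clalg_def zf_def)
lemma clone_nz[simp]: "(clone :: nat set \<Rightarrow> 'a) \<noteq> zf" by (auto simp: clone_def zf_def fun_eq_iff)

lemma galpha_clalg[simp]: "f \<in> clalg n \<Longrightarrow> galpha f \<in> clalg n" by (simp add: clalg_def galpha_def)
lemma clrev_clalg[simp]: "f \<in> clalg n \<Longrightarrow> clrev f \<in> clalg n" by (simp add: clalg_def clrev_def)
lemma galpha_galpha[simp]: "galpha (galpha f) = f" by (rule ext) (simp add: galpha_def flip: mult.assoc power_add)
lemma clrev_clrev[simp]: "clrev (clrev f) = f" by (rule ext) (simp add: clrev_def flip: mult.assoc power_add)
lemma galpha_add[simp]: "galpha (f \<oplus> g) = galpha f \<oplus> galpha g" by (rule ext) (simp add: galpha_def algebra_simps)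
lemma clrev_add[simp]: "clrev (f \<oplus> g) = clrev f \<oplus> clrev g" by (rule ext) (simp add: clrev_def algebra_simps)
lemma galpha_sc[simp]: "galpha (fsc c f) = fsc c (galpha f)" by (rule ext) (simp add: galpha_def algebra_simps)
lemma clrev_sc[simp]: "clrev (fsc c f) = fsc c (clrev f)" by (rule ext) (simp add: clrev_def algebra_simps)
lemma galpha_one[simp]: "galpha clone = clone" by (rule ext) (simp add: galpha_def clone_def)
lemma clrev_one[simp]: "clrev clone = clone" by (rule ext) (simp add: clrev_def clone_def)
lemma galpha_clrev: "galpha (clrev f) = clrev (galpha f)" by (rule ext) (simp add: galpha_def clrev_def algebra_simps)
lemma galpha_zf[simp]: "galpha zf = zf" by (rule ext) (simp add: galpha_def zf_def)
lemma clrev_zf[simp]: "clrev zf = zf" by (rule ext) (simp add: clrev_def zf_def)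

lemma fsc_fsc[simp]: "fsc a (fsc b f) = fsc (a * b) f" by (rule ext) simp
lemma fsc_one[simp]: "fsc 1 f = f" by (rule ext) simp
lemma fsc_zero[simp]: "fsc 0 f = zf" by (rule ext) (simp add: zf_def)
lemma fsc_zf[simp]: "fsc a zf = zf" by (rule ext) (simp add: zf_def)
lemma fadd_zf[simp]: "f \<oplus> zf = f" "zf \<oplus> f = f" by (rule ext, simp add: zf_def)+

lemma cleven_iff: fixes f :: "nat set \<Rightarrow> 'a" shows "f \<in> cleven n \<longleftrightarrow> f \<in> clalg n \<and> galpha f = f"
proof
  assume h: "f \<in> cleven n"
  have "galpha f A = f A" for A using h by (cases "even (card A)") (auto simp: cleven_def galpha_def)
  with h show "f \<in> clalg n \<and> galpha f = f" by (auto simp: cleven_def)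
next
  assume h: "f \<in> clalg n \<and> galpha f = f"
  { fix A :: "nat set" assume "odd (card A)"
    hence "- f A = f A" using fun_cong[OF conjunct2[OF h], of A] by (simp add: galpha_def)
    hence "f A = 0" by (simp add: eq_neg_iff_add_eq_0) }
  with h show "f \<in> cleven n" by (auto simp: cleven_def)
qed

lemma clodd_iff: fixes f :: "nat set \<Rightarrow> 'a" shows "f \<in> clodd n \<longleftrightarrow> f \<in> clalg n \<and> galpha f = fsc (-1) f"
proof
  assume h: "f \<in> clodd n"
  have "galpha f A = fsc (-1) f A" for A using h by (cases "even (card A)") (auto simp: clodd_def galpha_def)
  with h show "f \<in> clalg n \<and> galpha f = fsc (-1) f" by (auto simp: clodd_def)
next
  assume h: "f \<in> clalg n \<and> galpha f = fsc (-1) f"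
  { fix A :: "nat set" assume "even (card A)"
    hence "f A = - f A" using fun_cong[OF conjunct2[OF h], of A] by (simp add: galpha_def)
    hence "f A = 0" by (simp add: eq_neg_iff_add_eq_0) }
  with h show "f \<in> clodd n" by (auto simp: clodd_def)
qed

lemma grmod4_iff:
  fixes f :: "nat set \<Rightarrow> 'a"
  assumes k: "k < 4"
  shows "f \<in> grmod4 n k \<longleftrightarrow> f \<in> clalg n \<and> galpha f = fsc ((-1) ^ k) f \<and> clrev f = fsc (eps4 k) f"
proof
  assume h: "f \<in> grmod4 n k"
  have "galpha f A = fsc ((-1) ^ k) f A \<and> clrev f A = fsc (eps4 k) f A" for A
  proof (cases "f A = 0")
    case False
    with h have A: "card A mod 4 = k" "A \<in> PP" by (auto simp: grmod4_def clalg_def)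
    hence fA: "finite A" by (auto intro: finite_subset)
    have "even (card A) \<longleftrightarrow> even k" using A(1) by presburger
    hence e1: "(-1::'a) ^ card A = (-1) ^ k" by (simp add: neg1_pow_eq_iff)
    have e2: "eps4 (card A) = (eps4 k :: 'a)" using A(1) k by (simp add: eps4_def)
    show ?thesis unfolding galpha_def clrev_eps[OF fA] fsc_apply e1 e2 by simp
  qed (simp add: galpha_def clrev_def)
  with h show "f \<in> clalg n \<and> galpha f = fsc ((-1) ^ k) f \<and> clrev f = fsc (eps4 k) f"
    by (auto simp: grmod4_def fun_eq_iff)
next
  assume h: "f \<in> clalg n \<and> galpha f = fsc ((-1) ^ k) f \<and> clrev f = fsc (eps4 k) f"
  { fix A assume nz: "f A \<noteq> 0"
    with h have "A \<in> PP" by (auto simp: clalg_def)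
    hence fA: "finite A" by (auto intro: finite_subset)
    from h have "(-1) ^ card A * f A = (-1) ^ k * f A" by (auto simp: galpha_def fun_eq_iff)
    with nz have 1: "(-1::'a) ^ card A = (-1) ^ k" by simp
    from h have "clrev f A = fsc (eps4 k) f A" by simp
    hence "eps4 (card A) * f A = eps4 k * f A" by (simp add: clrev_eps[OF fA])
    with nz have 2: "(eps4 (card A) :: 'a) = eps4 k" by simp
    from 1 have p: "even (card A) \<longleftrightarrow> even k" by (simp add: neg1_pow_eq_iff)
    from 2 have q: "card A mod 4 < 2 \<longleftrightarrow> k mod 4 < 2" by (auto simp: eps4_def split: if_splits)
    have "card A mod 4 = k" using p q k by presburger
  }
  with h show "f \<in> grmod4 n k" by (auto simp: grmod4_def)
qed

end

context clf begin

abbreviation CC :: "(nat set \<Rightarrow> 'a) set" where "CC \<equiv> clalg n"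
definition unit :: "(nat set \<Rightarrow> 'a) \<Rightarrow> bool" where "unit T \<longleftrightarrow> T \<in> clunits n eta CC"
abbreviation inv :: "(nat set \<Rightarrow> 'a) \<Rightarrow> (nat set \<Rightarrow> 'a)" where "inv T \<equiv> clinv n eta T"
abbreviation II :: "nat set \<Rightarrow> 'a" where "II \<equiv> bl {..<n}"

lemma unit_iff: "unit T \<longleftrightarrow> T \<in> CC \<and> (\<exists>U\<in>CC. T \<odot> U = clone \<and> U \<odot> T = clone)"
  by (simp add: unit_def clunits_def)

lemma inv_unique:
  fixes T U U' :: "nat set \<Rightarrow> 'a"
  assumes "U \<in> CC" "U' \<in> CC" "U \<odot> T = clone" "T \<odot> U' = clone"
  shows "U = U'"
proof -
  have "U = U \<odot> (T \<odot> U')" using assms(1,4) by simp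
  also have "\<dots> = (U \<odot> T) \<odot> U'" by (rule mul_assoc[symmetric])
  also have "\<dots> = U'" using assms(2,3) by simp
  finally show ?thesis .
qed

lemma inv_props:
  assumes "unit T"
  shows "inv T \<in> CC" "T \<odot> inv T = clone" "inv T \<odot> T = clone"
proof -
  from assms obtain U where U: "U \<in> CC" "T \<odot> U = clone" "U \<odot> T = clone" by (auto simp: unit_iff)
  have "inv T = U" unfolding clinv_def
    by (rule the_equality) (use U in \<open>auto intro: inv_unique\<close>)
  thus "inv T \<in> CC" "T \<odot> inv T = clone" "inv T \<odot> T = clone" using U by auto
qed

lemma unitD: "unit T \<Longrightarrow> T \<in> CC" by (simp add: unit_iff)

lemma unitI: "T \<in> CC \<Longrightarrow> U \<in> CC \<Longrightarrow> T \<odot> U = clone \<Longrightarrow> U \<odot> T = clone \<Longrightarrow> unit T"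
  by (auto simp: unit_iff)

lemma inv_eqL: "unit T \<Longrightarrow> U \<in> CC \<Longrightarrow> U \<odot> T = clone \<Longrightarrow> inv T = U"
  using inv_unique[of U "inv T" T] inv_props[of T] by auto
lemma inv_eqR: "unit T \<Longrightarrow> U \<in> CC \<Longrightarrow> T \<odot> U = clone \<Longrightarrow> inv T = U"
  using inv_unique[of "inv T" U T] inv_props[of T] by auto

lemma unit_mul: assumes "unit S" "unit T" shows "unit (S \<odot> T)" "inv (S \<odot> T) = inv T \<odot> inv S"
proof -
  have a: "(S \<odot> T) \<odot> (inv T \<odot> inv S) = clone"
    using inv_props[OF assms(1)] inv_props[OF assms(2)] unitD[OF assms(2)]
    by (simp add: mul_assoc) (simp add: mul_assoc[symmetric])
  have b: "(inv T \<odot> inv S) \<odot> (S \<odot> T) = clone"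
    using inv_props[OF assms(1)] inv_props[OF assms(2)] unitD[OF assms(1)]
    by (simp add: mul_assoc) (simp add: mul_assoc[symmetric])
  show u: "unit (S \<odot> T)" by (rule unitI[OF _ _ a b]) auto
  show "inv (S \<odot> T) = inv T \<odot> inv S" by (rule inv_eqR[OF u _ a]) simp
qed

lemma unit_inv: assumes "unit T" shows "unit (inv T)" "inv (inv T) = T"
proof -
  show u: "unit (inv T)" using inv_props[OF assms] unitD[OF assms] by (intro unitI) auto
  show "inv (inv T) = T" using inv_props[OF assms] unitD[OF assms] by (intro inv_eqR[OF u]) auto
qed

lemma unit_clrev: assumes "unit T" shows "unit (clrev T)" "inv (clrev T) = clrev (inv T)"
proof -
  have a: "clrev T \<odot> clrev (inv T) = clone" using inv_props[OF assms]
    by (metis clrev_mul clrev_one)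
  have b: "clrev (inv T) \<odot> clrev T = clone" using inv_props[OF assms]
    by (metis clrev_mul clrev_one)
  show u: "unit (clrev T)" using inv_props[OF assms] unitD[OF assms] a b by (intro unitI) auto
  show "inv (clrev T) = clrev (inv T)" using inv_props[OF assms] a by (intro inv_eqR[OF u]) auto
qed

lemma unit_galpha: assumes "unit T" shows "unit (galpha T)" "inv (galpha T) = galpha (inv T)"
proof -
  have a: "galpha T \<odot> galpha (inv T) = clone" using inv_props[OF assms]
    by (metis galpha_mul galpha_one)
  have b: "galpha (inv T) \<odot> galpha T = clone" using inv_props[OF assms]
    by (metis galpha_mul galpha_one)
  show u: "unit (galpha T)" using inv_props[OF assms] unitD[OF assms] a b by (intro unitI) auto
  show "inv (galpha T) = galpha (inv T)" using inv_props[OF assms] a by (intro inv_eqR[OF u]) auto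
qed

lemma unit_nz: "unit T \<Longrightarrow> T \<noteq> zf"
  using inv_props(2)[of T] clone_nz by force

lemma cancelL: assumes "unit T" "X \<in> CC" "T \<odot> X = zf" shows "X = zf"
proof -
  have "X = (inv T \<odot> T) \<odot> X" using inv_props[OF assms(1)] assms(2) by simp
  also have "\<dots> = zf" by (simp add: mul_assoc assms(3))
  finally show ?thesis .
qed

lemma cancelR: assumes "unit T" "X \<in> CC" "X \<odot> T = zf" shows "X = zf"
proof -
  have "X = X \<odot> (T \<odot> inv T)" using inv_props[OF assms(1)] assms(2) by simp
  also have "\<dots> = zf" by (simp add: mul_assoc[symmetric] assms(3))
  finally show ?thesis .
qed

lemma unit_fsc: assumes "unit T" "c \<noteq> 0" shows "unit (fsc c T)" "inv (fsc c T) = fsc (1/c) (inv T)"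
proof -
  have a: "fsc c T \<odot> fsc (1/c) (inv T) = clone" using inv_props[OF assms(1)] assms(2)
    by (simp add: mul_sc_left mul_sc_right)
  have b: "fsc (1/c) (inv T) \<odot> fsc c T = clone" using inv_props[OF assms(1)] assms(2)
    by (simp add: mul_sc_left mul_sc_right)
  show u: "unit (fsc c T)" using a b inv_props[OF assms(1)] unitD[OF assms(1)] by (intro unitI) auto
  show "inv (fsc c T) = fsc (1/c) (inv T)" using a inv_props[OF assms(1)] by (intro inv_eqR[OF u]) auto
qed

lemma unit_one[simp]: "unit clone" by (rule unitI[of clone clone]) auto

lemma conj_id: assumes "unit T" "X \<in> CC" shows "inv T \<odot> (T \<odot> X) = X" "T \<odot> (inv T \<odot> X) = X"
  "(X \<odot> T) \<odot> inv T = X" "(X \<odot> inv T) \<odot> T = X"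
  using inv_props[OF assms(1)] assms(2) by (simp_all add: mul_assoc[symmetric] mul_assoc)

end

locale clf2 = clf + assumes n2: "n \<ge> 2"
begin

lemma PP_fin: "A \<in> PP \<Longrightarrow> finite A" by (auto intro: finite_subset)
lemma clalg_PP: "X \<in> CC \<Longrightarrow> X A \<noteq> 0 \<Longrightarrow> A \<in> PP" by (auto simp: clalg_def)

lemma bsign_nz: "bsign eta A B \<noteq> 0"
proof -
  have "pe (A \<inter> B) \<noteq> 0" using pe_sq[of "A \<inter> B"] by auto
  thus ?thesis by (simp add: bsign_pe)
qed

lemma bsign_sq: "bsign eta A B * bsign eta A B = 1"
proof -
  have "bsign eta A B * bsign eta A B = ((-1) ^ card (pairs A B) * (-1) ^ card (pairs A B)) * (pe (A \<inter> B) * pe (A \<inter> B))"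
    by (simp add: bsign_pe algebra_simps)
  also have "\<dots> = 1" by (simp only: pe_sq sgsq) simp
  finally show ?thesis .
qed

lemma comm_bl_parity:
  fixes X :: "nat set \<Rightarrow> 'a"
  assumes X: "X \<in> CC" and B: "B \<in> PP" and c: "X \<odot> bl B = bl B \<odot> X" and nz: "X A \<noteq> 0"
  shows "even (card A * card B + card (A \<inter> B))"
proof -
  have A: "A \<in> PP" using clalg_PP[OF X nz] .
  let ?C = "sd A B"
  have C: "?C \<in> PP" "sd ?C B = A" using A B by auto
  have "(X \<odot> bl B) ?C = (bl B \<odot> X) ?C" using c by simp
  hence "bsign eta A B * X A = bsign eta B A * X A" unfolding mul_bl_left[OF B] mul_bl_right[OF B] using C by simp
  hence "bsign eta A B * X A = (-1) ^ (card A * card B + card (A \<inter> B)) * (bsign eta A B * X A)"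
    using bsign_swap[OF PP_fin[OF A] PP_fin[OF B]] by (simp add: algebra_simps)
  hence "((-1) ^ (card A * card B + card (A \<inter> B)) - 1) * (bsign eta A B * X A) = 0"
    by (simp add: algebra_simps)
  moreover have "bsign eta A B * X A \<noteq> 0" using nz bsign_nz by simp
  ultimately have "(-1::'a) ^ (card A * card B + card (A \<inter> B)) = 1" by simp
  thus ?thesis using neg1_pow_eq_iff[of "card A * card B + card (A \<inter> B)" 0, where 'a='a] by simp
qed

lemma II_PP[simp]: "{..<n} \<in> PP" by simp
lemma card_II[simp]: "card {..<n} = n" by simp

lemma II_comm_odd:
  assumes "odd n" "Y \<in> CC" shows "II \<odot> Y = Y \<odot> II"
proof
  fix C
  show "(II \<odot> Y) C = (Y \<odot> II) C"
  proof (cases "C \<in> PP")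
    case True
    hence CP: "C \<subseteq> {..<n}" by simp
    let ?D = "sd C {..<n}"
    have D: "?D \<in> PP" using CP by auto
    have "bsign eta {..<n} ?D = bsign eta ?D {..<n}"
    proof -
      have "?D \<inter> {..<n} = ?D" using CP by auto
      hence "bsign eta {..<n} ?D = (-1) ^ (card ?D * (n + 1)) * bsign eta ?D {..<n}"
        using bsign_swap[OF PP_fin[OF D] PP_fin[OF II_PP]] by (simp add: algebra_simps)
      moreover have "even (card ?D * (n + 1))" using assms by simp
      ultimately show ?thesis by simp
    qed
    thus ?thesis unfolding mul_bl_left[OF II_PP] mul_bl_right[OF II_PP] by simp
  qed (simp add: mul_bl_left mul_bl_right)
qed

lemma II_comm_even:
  assumes "even n" shows "Y \<odot> II = II \<odot> galpha Y"
proof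
  fix C
  show "(Y \<odot> II) C = (II \<odot> galpha Y) C"
  proof (cases "C \<in> PP")
    case True
    hence CP: "C \<subseteq> {..<n}" by simp
    let ?D = "sd C {..<n}"
    have D: "?D \<in> PP" using CP by auto
    have "bsign eta {..<n} ?D * (-1) ^ card ?D = bsign eta ?D {..<n}"
    proof -
      have "?D \<inter> {..<n} = ?D" using CP by auto
      hence "bsign eta {..<n} ?D = (-1) ^ (card ?D * n + card ?D) * bsign eta ?D {..<n}"
        using bsign_swap[OF PP_fin[OF D] PP_fin[OF II_PP]] by (simp add: algebra_simps)
      moreover have "(-1::'a) ^ (card ?D * n + card ?D) = (-1) ^ card ?D"
      proof -
        have e: "(-1::'a) ^ (card ?D * n) = 1" by (rule neg_one_even_power) (use assms in simp)
        show ?thesis unfolding power_add e by simp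
      qed
      ultimately show ?thesis by (simp add: algebra_simps flip: power_add)
    qed
    thus ?thesis unfolding mul_bl_left[OF II_PP] mul_bl_right[OF II_PP] galpha_def by (simp add: algebra_simps)
  qed (simp add: mul_bl_left mul_bl_right)
qed

lemma II_sq: "II \<odot> II = fsc (bsign eta {..<n} {..<n}) clone"
  by (simp add: bl_mul_bl clone_bl)

definition sI :: 'a where "sI = bsign eta {..<n} {..<n}"
lemma sI_sq: "sI * sI = 1" by (simp add: sI_def bsign_sq)
lemma sI_nz: "sI \<noteq> 0" using sI_sq by auto

lemma II_unit: "unit II" "inv II = fsc sI II"
proof -
  have a: "II \<odot> fsc sI II = clone" using II_sq sI_sq by (simp add: mul_sc_right sI_def)
  have b: "fsc sI II \<odot> II = clone" using II_sq sI_sq by (simp add: mul_sc_left sI_def)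
  show u: "unit II" using a b by (intro unitI) auto
  show "inv II = fsc sI II" using a by (intro inv_eqR[OF u]) auto
qed

definition Zs :: "(nat set \<Rightarrow> 'a) \<Rightarrow> bool" where
  "Zs X \<longleftrightarrow> X \<in> CC \<and> (\<forall>A. X A \<noteq> 0 \<longrightarrow> A = {} \<or> A = {..<n})"

lemma II_ne: "{..<n} \<noteq> {}"
proof -
  have "0 \<in> {..<n}" using n2 by simp
  thus ?thesis by blast
qed

lemma grade0_iff: "X \<in> grade n 0 \<longleftrightarrow> X \<in> CC \<and> (\<forall>A. X A \<noteq> 0 \<longrightarrow> A = {})"
proof
  assume h: "X \<in> grade n 0"
  { fix A assume nz: "X A \<noteq> 0"
    hence "A \<in> PP" "card A = 0" using h clalg_PP by (auto simp: grade_def)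
    hence "A = {}" using PP_fin by simp }
  with h show "X \<in> CC \<and> (\<forall>A. X A \<noteq> 0 \<longrightarrow> A = {})" by (simp add: grade_def)
next
  assume h: "X \<in> CC \<and> (\<forall>A. X A \<noteq> 0 \<longrightarrow> A = {})"
  thus "X \<in> grade n 0" unfolding grade_def by force
qed

lemma graden_iff: "X \<in> grade n n \<longleftrightarrow> X \<in> CC \<and> (\<forall>A. X A \<noteq> 0 \<longrightarrow> A = {..<n})"
proof
  assume h: "X \<in> grade n n"
  { fix A assume nz: "X A \<noteq> 0"
    hence "A \<in> PP" "card A = n" using h clalg_PP by (auto simp: grade_def)
    hence "A = {..<n}" by (intro card_subset_eq) auto }
  with h show "X \<in> CC \<and> (\<forall>A. X A \<noteq> 0 \<longrightarrow> A = {..<n})" by (simp add: grade_def)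
next
  assume h: "X \<in> CC \<and> (\<forall>A. X A \<noteq> 0 \<longrightarrow> A = {..<n})"
  thus "X \<in> grade n n" unfolding grade_def by force
qed

lemma ssum_iff: "X \<in> ssum (grade n 0) (grade n n) \<longleftrightarrow> Zs X"
proof
  assume "X \<in> ssum (grade n 0) (grade n n)"
  then obtain x y where X: "X = (\<lambda>A. x A + y A)" and x: "x \<in> grade n 0" and y: "y \<in> grade n n"
    unfolding ssum_def by blast
  have xx: "x \<in> CC" "\<And>A. x A \<noteq> 0 \<Longrightarrow> A = {}" using x unfolding grade0_iff by auto
  have yy: "y \<in> CC" "\<And>A. y A \<noteq> 0 \<Longrightarrow> A = {..<n}" using y unfolding graden_iff by auto
  have "X = x \<oplus> y" unfolding X fadd_def ..
  hence "X \<in> CC" using xx yy by simp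
  moreover have "X A \<noteq> 0 \<Longrightarrow> A = {} \<or> A = {..<n}" for A
  proof -
    assume "X A \<noteq> 0"
    hence "x A \<noteq> 0 \<or> y A \<noteq> 0" unfolding X by auto
    thus ?thesis using xx yy by blast
  qed
  ultimately show "Zs X" unfolding Zs_def by blast
next
  assume Z: "Zs X"
  let ?x = "\<lambda>A. if A = {} then X A else 0" and ?y = "\<lambda>A. if A = {..<n} then X A else 0"
  have Z1: "X \<in> CC" and Z2: "\<And>A. X A \<noteq> 0 \<Longrightarrow> A = {} \<or> A = {..<n}" using Z unfolding Zs_def by auto
  have e1: "X = (\<lambda>A. ?x A + ?y A)"
  proof
    fix A show "X A = ?x A + ?y A" using Z2[of A] II_ne by (cases "X A = 0") auto
  qed
  have "?x \<in> CC" "?y \<in> CC" using Z1 by (auto simp: clalg_def)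
  hence g: "?x \<in> grade n 0" "?y \<in> grade n n" unfolding grade0_iff graden_iff by auto
  have "\<exists>x y. X = (\<lambda>A. x A + y A) \<and> x \<in> grade n 0 \<and> y \<in> grade n n"
    by (rule exI[of _ ?x], rule exI[of _ ?y]) (use e1 g in blast)
  thus "X \<in> ssum (grade n 0) (grade n n)" unfolding ssum_def by simp
qed

lemma center_iff: "X \<in> clcenter n \<longleftrightarrow> Zs X \<and> (even n \<longrightarrow> X {..<n} = 0)"
proof (cases "even n")
  case True
  have "X \<in> grade n 0 \<longleftrightarrow> Zs X \<and> X {..<n} = 0"
    unfolding grade0_iff Zs_def using II_ne by metis
  thus ?thesis using True by (simp add: clcenter_def)
next
  case False
  thus ?thesis by (simp add: clcenter_def ssum_iff)
qed

lemma Zs_decomp: "Zs X \<Longrightarrow> X = fsc (X {}) clone \<oplus> fsc (X {..<n}) II"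
proof
  fix A assume "Zs X"
  thus "X A = (fsc (X {}) clone \<oplus> fsc (X {..<n}) II) A"
    using II_ne unfolding Zs_def by (cases "X A = 0") (auto simp: clone_def bl_def)
qed

lemma Zs_span: "Zs (fsc a clone \<oplus> fsc b II)"
proof -
  have "fsc a clone \<oplus> fsc b II \<in> CC" by simp
  thus ?thesis unfolding Zs_def using II_ne by (auto simp: clone_def bl_def)
qed

lemma span_coeffs: "(fsc a clone \<oplus> fsc b II) {} = a" "(fsc a clone \<oplus> fsc b II) {..<n} = b"
  using II_ne by (auto simp: clone_def bl_def)

lemma span_mul: "(fsc a clone \<oplus> fsc b II) \<odot> (fsc c clone \<oplus> fsc d II) = fsc (a * c + b * d * sI) clone \<oplus> fsc (a * d + b * c) II"
  apply (simp add: mul_add_left mul_add_right mul_sc_left mul_sc_right II_sq)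
  apply (rule ext)
  apply (simp add: sI_def algebra_simps)
  done

lemma center_comm: assumes "X \<in> clcenter n" "Y \<in> CC" shows "X \<odot> Y = Y \<odot> X"
proof -
  have Z: "Zs X" and e: "even n \<longrightarrow> X {..<n} = 0" using assms(1) by (auto simp: center_iff)
  have "X \<odot> Y = fsc (X {}) Y \<oplus> fsc (X {..<n}) (II \<odot> Y)"
    by (subst Zs_decomp[OF Z]) (simp add: mul_add_left mul_sc_left assms(2))
  also have "\<dots> = fsc (X {}) Y \<oplus> fsc (X {..<n}) (Y \<odot> II)"
    using e II_comm_odd[OF _ assms(2)] by (cases "even n") auto
  also have "\<dots> = Y \<odot> X"
    by (subst (2) Zs_decomp[OF Z]) (simp add: mul_add_right mul_sc_right assms(2))
  finally show ?thesis .
qed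

end

context clf2 begin

lemma cent_blades:
  fixes X :: "nat set \<Rightarrow> 'a"
  assumes m: "1 \<le> m" "m < n" and X: "X \<in> CC"
    and c: "\<And>B. B \<in> PP \<Longrightarrow> card B = m \<Longrightarrow> X \<odot> bl B = bl B \<odot> X" and nz: "X A \<noteq> 0"
  shows "A = {} \<or> (A = {..<n} \<and> even (m * (n + 1)))"
proof -
  have A: "A \<in> PP" using clalg_PP[OF X nz] .
  have par: "even (card A * m + card (A \<inter> B))" if "B \<in> PP" "card B = m" for B
    using comm_bl_parity[OF X that(1) c[OF that] nz] that(2) by simp
  show ?thesis
  proof (cases "A = {} \<or> A = {..<n}")
    case True
    show ?thesis
    proof (cases "A = {}")
      case False
      with True have An: "A = {..<n}" by simp
      obtain B where B: "B \<subseteq> {..<n}" "card B = m" "finite B"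
        using obtain_subset_with_card_n[of m "{..<n}"] m by auto
      have "A \<inter> B = B" using An B by auto
      hence "even (n * m + m)" using par[of B] B An by simp
      hence "even (m * (n + 1))" by (simp add: algebra_simps)
      thus ?thesis using An by simp
    qed simp
  next
    case False
    then obtain a where a: "a \<in> A" by auto
    from False A obtain b where b: "b < n" "b \<notin> A" by auto
    have ab: "a \<noteq> b" using a b by auto
    have an: "a < n" using a A by auto
    let ?R = "{..<n} - {a, b}"
    have cR: "card ?R = n - 2" using ab an b by (simp add: card_Diff_subset)
    have "m - 1 \<le> card ?R" using m cR by linarith
    then obtain S where S: "S \<subseteq> ?R" "card S = m - 1" "finite S"
      using obtain_subset_with_card_n[of "m - 1" ?R] by blast
    have aS: "a \<notin> S" and bS: "b \<notin> S" using S by auto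
    have B1: "insert b S \<in> PP" "card (insert b S) = m" using S b bS m by auto
    have B2: "insert a S \<in> PP" "card (insert a S) = m" using S an aS m by auto
    have i1: "A \<inter> insert b S = A \<inter> S" using b by auto
    have i2: "A \<inter> insert a S = insert a (A \<inter> S)" using a by auto
    have "card (A \<inter> insert a S) = card (A \<inter> S) + 1" unfolding i2 using aS S by simp
    hence "even (card A * m + card (A \<inter> S))" "even (card A * m + card (A \<inter> S) + 1)"
      using par[OF B1] par[OF B2] i1 by simp_all
    thus ?thesis by simp
  qed
qed

lemma comm_gens_center:
  fixes X :: "nat set \<Rightarrow> 'a"
  assumes X: "X \<in> CC" and c: "\<And>i. i < n \<Longrightarrow> X \<odot> bl {i} = bl {i} \<odot> X"
  shows "X \<in> clcenter n"
proof -
  have c': "X \<odot> bl B = bl B \<odot> X" if "B \<in> PP" "card B = 1" for B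
  proof -
    from that obtain i where "B = {i}" by (auto simp: card_Suc_eq)
    thus ?thesis using c that by auto
  qed
  have h: "X A = 0 \<or> A = {} \<or> (A = {..<n} \<and> odd n)" for A
    using cent_blades[of 1 X A, OF _ _ X c'] n2 by auto
  show ?thesis unfolding center_iff Zs_def using X h II_ne by auto
qed

lemma center_CC: "(X :: nat set \<Rightarrow> 'a) \<in> clcenter n \<Longrightarrow> X \<in> CC" by (simp add: center_iff Zs_def)

lemma comm_all_center: "(X :: nat set \<Rightarrow> 'a) \<in> CC \<Longrightarrow> (\<And>Y. Y \<in> CC \<Longrightarrow> X \<odot> Y = Y \<odot> X) \<Longrightarrow> X \<in> clcenter n"
  by (rule comm_gens_center) auto

lemma center_mul: fixes X Y :: "nat set \<Rightarrow> 'a" assumes "X \<in> clcenter n" "Y \<in> clcenter n" shows "X \<odot> Y \<in> clcenter n"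
proof (rule comm_all_center)
  fix Z :: "nat set \<Rightarrow> 'a" assume Z: "Z \<in> CC"
  have "X \<odot> Y \<odot> Z = X \<odot> (Z \<odot> Y)" using center_comm[OF assms(2) Z] by (simp add: mul_assoc)
  also have "\<dots> = Z \<odot> (X \<odot> Y)" using center_comm[OF assms(1) Z] center_comm[OF assms(1)] by (simp add: mul_assoc[symmetric])
  finally show "X \<odot> Y \<odot> Z = Z \<odot> (X \<odot> Y)" .
qed simp

lemma center_inv: fixes X :: "nat set \<Rightarrow> 'a" assumes "X \<in> clcenter n" "unit X" shows "inv X \<in> clcenter n"
proof (rule comm_all_center)
  show "inv X \<in> CC" using inv_props[OF assms(2)] by simp
  fix Z :: "nat set \<Rightarrow> 'a" assume Z: "Z \<in> CC"
  have "inv X \<odot> Z = inv X \<odot> (Z \<odot> X) \<odot> inv X" using conj_id[OF assms(2) Z] by (simp add: mul_assoc)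
  also have "\<dots> = inv X \<odot> (X \<odot> Z) \<odot> inv X" using center_comm[OF assms(1) Z] by simp
  also have "\<dots> = Z \<odot> inv X" using conj_id[OF assms(2) Z] by (simp add: mul_assoc[symmetric])
  finally show "inv X \<odot> Z = Z \<odot> inv X" .
qed

lemma center_clrev: "(X :: nat set \<Rightarrow> 'a) \<in> clcenter n \<Longrightarrow> clrev X \<in> clcenter n"
  using clrev_clalg[of X] center_CC[of X] unfolding center_iff Zs_def by (auto simp: clrev_def)

lemma center_galpha: "(X :: nat set \<Rightarrow> 'a) \<in> clcenter n \<Longrightarrow> galpha X \<in> clcenter n"
  using galpha_clalg[of X] center_CC[of X] unfolding center_iff Zs_def by (auto simp: galpha_def)

lemma one_center[simp]: "(clone :: nat set \<Rightarrow> 'a) \<in> clcenter n"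
  using clone_clalg II_ne unfolding center_iff Zs_def by (auto simp: clone_def)

lemma center_unit_iff: "(X :: nat set \<Rightarrow> 'a) \<in> clunits n eta (clcenter n) \<longleftrightarrow> X \<in> clcenter n \<and> unit X"
  unfolding clunits_def unit_iff by auto

lemma units_iff: "(X :: nat set \<Rightarrow> 'a) \<in> clunits n eta S \<longleftrightarrow> X \<in> S \<and> unit X"
  unfolding clunits_def unit_iff by auto

end

context clf2 begin

lemma fsc_zf_iff: fixes T :: "nat set \<Rightarrow> 'a" shows "fsc a T = zf \<Longrightarrow> T \<noteq> zf \<Longrightarrow> a = 0"
  by (auto simp: fun_eq_iff zf_def)

lemma mul_comm_assoc:
  fixes A B Z :: "nat set \<Rightarrow> 'a"
  assumes "A \<odot> B = B \<odot> A" shows "A \<odot> (B \<odot> Z) = B \<odot> (A \<odot> Z)"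
  by (simp add: mul_assoc[symmetric] assms)

lemma comm_inv:
  fixes N X :: "nat set \<Rightarrow> 'a"
  assumes "unit N" "X \<in> CC" "N \<odot> X = X \<odot> N" shows "inv N \<odot> X = X \<odot> inv N"
proof -
  have "inv N \<odot> X = inv N \<odot> (X \<odot> N) \<odot> inv N" using conj_id[OF assms(1,2)] by (simp add: mul_assoc)
  also have "\<dots> = X \<odot> inv N" using assms(3) conj_id[OF assms(1,2)] by (simp add: mul_assoc[symmetric])
  finally show ?thesis .
qed

lemma conj_eq_comm:
  fixes A B X :: "nat set \<Rightarrow> 'a"
  assumes A: "unit A" and B: "unit B" and X: "X \<in> CC"
    and e: "A \<odot> X \<odot> inv A = B \<odot> X \<odot> inv B"
  shows "(inv B \<odot> A) \<odot> X = X \<odot> (inv B \<odot> A)"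
proof -
  have "(inv B \<odot> A) \<odot> X = inv B \<odot> (A \<odot> X \<odot> inv A) \<odot> A"
    using conj_id[OF A X] by (simp add: mul_assoc)
  also have "\<dots> = inv B \<odot> (B \<odot> X \<odot> inv B) \<odot> A" by (simp only: e)
  also have "\<dots> = X \<odot> (inv B \<odot> A)" using conj_id[OF B X] by (simp add: mul_assoc[symmetric])
  finally show ?thesis .
qed

lemma gamma_unit: "T \<in> Gamma n eta k \<Longrightarrow> unit T" by (simp add: Gamma_def unit_def)

lemma grmod4_CC: "X \<in> grmod4 n k \<Longrightarrow> X \<in> CC" by (simp add: grmod4_def)

lemma comm_facts:
  fixes T X :: "nat set \<Rightarrow> 'a"
  assumes k: "k < 4" and T: "T \<in> Gamma n eta k" and X: "X \<in> grmod4 n k"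
  shows "(clrev T \<odot> T) \<odot> X = X \<odot> (clrev T \<odot> T)" "(inv T \<odot> galpha T) \<odot> X = X \<odot> (inv T \<odot> galpha T)"
proof -
  have u: "unit T" using T by (rule gamma_unit)
  have XC: "X \<in> CC" using X by (rule grmod4_CC)
  have Y: "T \<odot> X \<odot> inv T \<in> grmod4 n k" using T X by (auto simp: Gamma_def)
  note Xi = X[unfolded grmod4_iff[OF k]] and Yi = Y[unfolded grmod4_iff[OF k]]
  have ur: "unit (clrev T)" "inv (clrev T) = clrev (inv T)" using unit_clrev[OF u] .
  have ua: "unit (galpha T)" "inv (galpha T) = galpha (inv T)" using unit_galpha[OF u] .
  have uir: "unit (inv (clrev T))" "inv (inv (clrev T)) = clrev T" using unit_inv[OF ur(1)] .
  have "clrev (T \<odot> X \<odot> inv T) = fsc (eps4 k) (inv (clrev T) \<odot> X \<odot> clrev T)"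
    using Xi ur(2) by (simp add: clrev_mul mul_sc_left mul_sc_right mul_assoc)
  hence "fsc (eps4 k) (inv (clrev T) \<odot> X \<odot> clrev T) = fsc (eps4 k) (T \<odot> X \<odot> inv T)" using Yi by simp
  hence "fsc (eps4 k) (fsc (eps4 k) (inv (clrev T) \<odot> X \<odot> clrev T)) = fsc (eps4 k) (fsc (eps4 k) (T \<odot> X \<odot> inv T))" by simp
  hence e1: "inv (clrev T) \<odot> X \<odot> inv (inv (clrev T)) = T \<odot> X \<odot> inv T" using uir(2) by simp
  have c1: "(inv T \<odot> inv (clrev T)) \<odot> X = X \<odot> (inv T \<odot> inv (clrev T))"
    by (rule conj_eq_comm[OF uir(1) u XC e1])
  have "inv T \<odot> inv (clrev T) = inv (clrev T \<odot> T)" using unit_mul[OF ur(1) u] by simp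
  with c1 have "inv (clrev T \<odot> T) \<odot> X = X \<odot> inv (clrev T \<odot> T)" by simp
  from comm_inv[OF unit_inv(1)[OF unit_mul(1)[OF ur(1) u]] XC this]
  show "(clrev T \<odot> T) \<odot> X = X \<odot> (clrev T \<odot> T)" using unit_inv(2)[OF unit_mul(1)[OF ur(1) u]] by simp
  have "galpha (T \<odot> X \<odot> inv T) = fsc ((-1)^k) (galpha T \<odot> X \<odot> inv (galpha T))"
    using Xi ua(2) by (simp add: galpha_mul mul_sc_left mul_sc_right mul_assoc)
  hence "fsc ((-1)^k) (galpha T \<odot> X \<odot> inv (galpha T)) = fsc ((-1)^k) (T \<odot> X \<odot> inv T)" using Yi by simp
  hence "fsc ((-1)^k) (fsc ((-1)^k) (galpha T \<odot> X \<odot> inv (galpha T))) = fsc ((-1)^k) (fsc ((-1)^k) (T \<odot> X \<odot> inv T))" by simp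
  hence e2: "galpha T \<odot> X \<odot> inv (galpha T) = T \<odot> X \<odot> inv T" by (simp flip: power_add)
  show "(inv T \<odot> galpha T) \<odot> X = X \<odot> (inv T \<odot> galpha T)"
    by (rule conj_eq_comm[OF ua(1) u XC e2])
qed

end

context clf2 begin

lemma ep_clalg[simp]: "(f :: nat set \<Rightarrow> 'a) \<in> CC \<Longrightarrow> ep f \<in> CC" unfolding clalg_def ep_def by auto
lemma op_clalg[simp]: "(f :: nat set \<Rightarrow> 'a) \<in> CC \<Longrightarrow> op f \<in> CC" unfolding clalg_def op_def by auto
lemma ep_even: "(f :: nat set \<Rightarrow> 'a) \<in> CC \<Longrightarrow> ep f \<in> cleven n" unfolding cleven_def ep_def clalg_def by auto
lemma op_odd: "(f :: nat set \<Rightarrow> 'a) \<in> CC \<Longrightarrow> op f \<in> clodd n" unfolding clodd_def op_def clalg_def by auto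
lemma ep_add: "ep (f \<oplus> g) = ep f \<oplus> (ep g :: nat set \<Rightarrow> 'a)" by (rule ext) (simp add: ep_def)
lemma ep_sc: "ep (fsc c f) = fsc c (ep f :: nat set \<Rightarrow> 'a)" by (rule ext) (simp add: ep_def)
lemma ep_galpha: "ep (galpha f) = (ep f :: nat set \<Rightarrow> 'a)" by (rule ext) (simp add: ep_def galpha_def)

lemma ep_mulII:
  fixes f :: "nat set \<Rightarrow> 'a"
  assumes "odd n" shows "ep (f \<odot> II) = op f \<odot> II"
proof
  fix C
  show "ep (f \<odot> II) C = (op f \<odot> II) C"
  proof (cases "C \<in> PP")
    case True
    hence CP: "C \<subseteq> {..<n}" by simp
    have "sd C {..<n} = {..<n} - C" using CP by auto
    moreover have "card ({..<n} - C) = n - card C" using CP by (simp add: card_Diff_subset finite_subset)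
    moreover have "card C \<le> n" using card_mono[OF finite_lessThan CP] by simp
    ultimately have "even (card C) \<longleftrightarrow> odd (card (sd C {..<n}))" using assms by auto
    thus ?thesis unfolding ep_def op_def mul_bl_right[OF II_PP] using True by auto
  qed (simp add: ep_def mul_bl_right)
qed

lemma alpha_scalar:
  fixes T :: "nat set \<Rightarrow> 'a"
  assumes u: "unit T" and e: "galpha T = fsc c T"
  shows "T \<in> cleven n \<or> T \<in> clodd n"
proof -
  have "T = galpha (galpha T)" by simp
  also have "\<dots> = fsc (c * c) T" by (simp only: e galpha_sc fsc_fsc)
  finally have ee: "T = fsc (c * c) T" .
  have "fsc (c * c - 1) T = zf"
  proof
    fix A have "T A = c * c * T A" using fun_cong[OF ee, of A] by simp
    thus "fsc (c * c - 1) T A = zf A" by (simp add: zf_def algebra_simps)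
  qed
  hence "c * c - 1 = 0" using unit_nz[OF u] fsc_zf_iff by blast
  hence "(c - 1) * (c + 1) = 0" by (simp add: algebra_simps)
  hence "c = 1 \<or> c = -1" by (auto simp: eq_neg_iff_add_eq_0)
  thus ?thesis using e unitD[OF u] by (auto simp: cleven_iff clodd_iff)
qed

lemma evenodd_setP:
  fixes T :: "nat set \<Rightarrow> 'a"
  assumes "unit T" "T \<in> cleven n \<or> T \<in> clodd n" shows "T \<in> setP n eta"
proof -
  have "T = clone \<odot> T" using unitD[OF assms(1)] by simp
  moreover have "clone \<in> clunits n eta (clcenter n)" by (simp add: center_unit_iff)
  moreover have "T \<in> clunits n eta (cleven n) \<union> clunits n eta (clodd n)" using assms by (auto simp: units_iff)
  ultimately show ?thesis unfolding setP_def by blast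
qed

lemma P_from_c:
  fixes T :: "nat set \<Rightarrow> 'a"
  assumes u: "unit T" and c: "inv T \<odot> galpha T \<in> clcenter n"
  shows "T \<in> setP n eta"
proof -
  define cc where "cc = inv T \<odot> galpha T"
  have TC: "T \<in> CC" using unitD[OF u] .
  have aT: "galpha T = T \<odot> cc" using conj_id[OF u, of "galpha T"] TC by (simp add: cc_def)
  have Zc: "Zs cc" and ec: "even n \<longrightarrow> cc {..<n} = 0" using c by (auto simp: center_iff cc_def)
  define c0 where "c0 = cc {}"
  define c1 where "c1 = cc {..<n}"
  have cdec: "cc = fsc c0 clone \<oplus> fsc c1 II" unfolding c0_def c1_def by (rule Zs_decomp[OF Zc])
  have aT2: "galpha T = fsc c0 T \<oplus> fsc c1 (T \<odot> II)"
    unfolding aT by (subst cdec) (simp add: mul_add_right mul_sc_right TC)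
  show ?thesis
  proof (cases "c1 = 0")
    case True
    hence "galpha T = fsc c0 T" using aT2 by simp
    from alpha_scalar[OF u this] show ?thesis by (rule evenodd_setP[OF u])
  next
    case False
    hence on: "odd n" using ec c1_def by auto
    have "ep T = ep (galpha T)" by (simp add: ep_galpha)
    also have "\<dots> = fsc c0 (ep T) \<oplus> fsc c1 (op T \<odot> II)" unfolding aT2 by (simp add: ep_add ep_sc ep_mulII[OF on])
    finally have e1: "ep T = fsc c0 (ep T) \<oplus> fsc c1 (op T \<odot> II)" .
    have e2: "fsc c1 (op T \<odot> II) = fsc (1 - c0) (ep T)"
    proof
      fix x
      have "ep T x = c0 * ep T x + c1 * (op T \<odot> II) x" using fun_cong[OF e1, of x] by simp
      thus "fsc c1 (op T \<odot> II) x = fsc (1 - c0) (ep T) x" by (simp add: algebra_simps)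
    qed
    have "fsc (c1 * sI) (op T) = fsc c1 (op T \<odot> II \<odot> II)"
      by (simp add: mul_assoc II_sq sI_def mul_sc_right TC)
    also have "\<dots> = fsc (1 - c0) (ep T \<odot> II)" using arg_cong[OF e2, of "\<lambda>z. z \<odot> II"] by (simp add: mul_sc_left)
    finally have e3: "fsc (c1 * sI) (op T) = fsc (1 - c0) (ep T \<odot> II)" .
    define d where "d = (1 - c0) / (c1 * sI)"
    have opT: "op T = fsc d (ep T \<odot> II)"
    proof -
      have "op T = fsc (1 / (c1 * sI)) (fsc (c1 * sI) (op T))" using False sI_nz by simp
      also have "\<dots> = fsc d (ep T \<odot> II)" unfolding e3 d_def by simp
      finally show ?thesis .
    qed
    define W where "W = fsc 1 clone \<oplus> fsc d II"
    have WZ: "W \<in> clcenter n" unfolding W_def center_iff using Zs_span[of 1 d] on by blast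
    have WC: "W \<in> CC" using center_CC[OF WZ] .
    have TW: "T = ep T \<odot> W"
    proof -
      have "T = ep T \<oplus> op T" by (rule ep_op)
      also have "\<dots> = ep T \<odot> W" unfolding W_def opT by (simp add: mul_add_right mul_sc_right TC)
      finally show ?thesis .
    qed
    have TW2: "T = W \<odot> ep T" using TW center_comm[OF WZ, of "ep T"] TC by simp
    have iC: "inv T \<in> CC" using inv_props[OF u] by simp
    have r1: "ep T \<odot> (W \<odot> inv T) = clone" using inv_props(2)[OF u] TW by (simp add: mul_assoc[symmetric])
    have r2: "(W \<odot> inv T) \<odot> ep T = clone"
    proof -
      have "(W \<odot> inv T) \<odot> ep T = (inv T \<odot> W) \<odot> ep T" using center_comm[OF WZ iC] by simp
      also have "\<dots> = clone" using inv_props(3)[OF u] TW2 by (simp add: mul_assoc)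
      finally show ?thesis .
    qed
    have ueT: "unit (ep T)" using r1 r2 TC iC WC by (intro unitI) auto
    have s1: "W \<odot> (ep T \<odot> inv T) = clone" using inv_props(2)[OF u] TW2 by (simp add: mul_assoc[symmetric])
    have s2: "(ep T \<odot> inv T) \<odot> W = clone"
      using r1 center_comm[OF WZ iC] by (simp add: mul_assoc)
    have uW: "unit W" using s1 s2 TC iC WC by (intro unitI) auto
    have "W \<in> clunits n eta (clcenter n)" using WZ uW by (simp add: center_unit_iff)
    moreover have "ep T \<in> clunits n eta (cleven n) \<union> clunits n eta (clodd n)"
      using ueT ep_even[OF TC] by (simp add: units_iff)
    ultimately show ?thesis using TW2 unfolding setP_def by blast
  qed
qed

end

context clf2 begin

lemma conjS:
  fixes S X :: "nat set \<Rightarrow> 'a"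
  assumes u: "unit S" and sg: "galpha S = fsc \<sigma> S" "\<sigma> * \<sigma> = 1" and k: "k < 4" and X: "X \<in> grmod4 n k"
   and NX: "(clrev S \<odot> S) \<odot> X = X \<odot> (clrev S \<odot> S)"
  shows "S \<odot> X \<odot> inv S \<in> grmod4 n k"
proof -
  define N where "N = clrev S \<odot> S"
  have SC: "S \<in> CC" using unitD[OF u] .
  have XC: "X \<in> CC" using X by (rule grmod4_CC)
  note Xi = X[unfolded grmod4_iff[OF k]]
  have uN: "unit N" unfolding N_def by (rule unit_mul(1)[OF unit_clrev(1)[OF u] u])
  have iNC: "inv N \<in> CC" using inv_props[OF uN] by simp
  have iS: "inv S = inv N \<odot> clrev S"
  proof (rule inv_eqL[OF u])
    show "inv N \<odot> clrev S \<in> CC" by simp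
    show "inv N \<odot> clrev S \<odot> S = clone" using inv_props(3)[OF uN] by (simp add: N_def mul_assoc)
  qed
  have cN: "inv N \<odot> X = X \<odot> inv N" using comm_inv[OF uN XC] NX by (simp add: N_def)
  have gN: "galpha N = N" unfolding N_def using sg
    by (simp add: galpha_mul galpha_clrev mul_sc_left mul_sc_right)
  have gN': "galpha (inv N) = inv N" using unit_galpha(2)[OF uN] gN by simp
  have rN: "clrev N = N" unfolding N_def by (simp add: clrev_mul)
  have rN': "clrev (inv N) = inv N" using unit_clrev(2)[OF uN] rN by simp
  define Y where "Y = S \<odot> X \<odot> (inv N \<odot> clrev S)"
  have "galpha Y = fsc (\<sigma> * (-1)^k * \<sigma>) Y"
    unfolding Y_def using Xi sg gN'
    by (simp add: galpha_mul galpha_clrev mul_sc_left mul_sc_right mul_assoc)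
  moreover have "\<sigma> * (-1)^k * \<sigma> = (-1::'a)^k" using sg(2) by (simp add: algebra_simps)
  ultimately have gY: "galpha Y = fsc ((-1)^k) Y" by simp
  have "clrev Y = fsc (eps4 k) (S \<odot> (inv N \<odot> (X \<odot> clrev S)))"
    unfolding Y_def using Xi rN'
    by (simp add: clrev_mul mul_sc_left mul_sc_right mul_assoc)
  also have "S \<odot> (inv N \<odot> (X \<odot> clrev S)) = Y"
    unfolding Y_def using mul_comm_assoc[OF cN, of "clrev S"] by (simp add: mul_assoc)
  finally have rY: "clrev Y = fsc (eps4 k) Y" .
  have "Y \<in> grmod4 n k" unfolding grmod4_iff[OF k] using gY rY by (simp add: Y_def)
  thus ?thesis using iS by (simp add: Y_def)
qed

lemma WS_conj:
  fixes W S X :: "nat set \<Rightarrow> 'a"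
  assumes W: "W \<in> clcenter n" "unit W" and S: "unit S" "S \<in> cleven n \<or> S \<in> clodd n"
    and k: "k < 4" and X: "X \<in> grmod4 n k"
    and NX: "(clrev (W \<odot> S) \<odot> (W \<odot> S)) \<odot> X = X \<odot> (clrev (W \<odot> S) \<odot> (W \<odot> S))"
  shows "(W \<odot> S) \<odot> X \<odot> inv (W \<odot> S) \<in> grmod4 n k"
proof -
  have SC: "S \<in> CC" using unitD[OF S(1)] .
  have WC: "W \<in> CC" using unitD[OF W(2)] .
  have XC: "X \<in> CC" using X by (rule grmod4_CC)
  define M where "M = clrev W \<odot> W"
  have MZ: "M \<in> clcenter n" unfolding M_def by (intro center_mul center_clrev W)
  have uM: "unit M" unfolding M_def by (rule unit_mul(1)[OF unit_clrev(1)[OF W(2)] W(2)])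
  have iMZ: "inv M \<in> clcenter n" by (rule center_inv[OF MZ uM])
  define NT where "NT = clrev (W \<odot> S) \<odot> (W \<odot> S)"
  have NT: "NT = M \<odot> (clrev S \<odot> S)"
  proof -
    have "NT = clrev S \<odot> (M \<odot> S)" unfolding NT_def M_def by (simp add: clrev_mul mul_assoc)
    also have "\<dots> = M \<odot> (clrev S \<odot> S)" using center_comm[OF MZ, of "clrev S"] SC
      by (simp add: mul_assoc[symmetric])
    finally show ?thesis .
  qed
  have NS: "clrev S \<odot> S = inv M \<odot> NT"
    unfolding NT using conj_id[OF uM, of "clrev S \<odot> S"] by simp
  have NSX: "(clrev S \<odot> S) \<odot> X = X \<odot> (clrev S \<odot> S)"
  proof -
    have "(clrev S \<odot> S) \<odot> X = inv M \<odot> (NT \<odot> X)" unfolding NS by (simp add: mul_assoc)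
    also have "\<dots> = inv M \<odot> (X \<odot> NT)" using NX by (simp add: NT_def)
    also have "\<dots> = X \<odot> (inv M \<odot> NT)" using center_comm[OF iMZ XC] by (simp add: mul_assoc[symmetric])
    finally show ?thesis unfolding NS .
  qed
  have "\<exists>\<sigma>. galpha S = fsc \<sigma> S \<and> \<sigma> * \<sigma> = (1::'a)"
    using S(2)
  proof
    assume "S \<in> cleven n" thus ?thesis by (intro exI[of _ 1]) (simp add: cleven_iff)
  next
    assume "S \<in> clodd n" thus ?thesis by (intro exI[of _ "-1"]) (simp add: clodd_iff)
  qed
  then obtain \<sigma> where sg: "galpha S = fsc \<sigma> S" "\<sigma> * \<sigma> = (1::'a)" by blast
  have SX: "S \<odot> X \<odot> inv S \<in> grmod4 n k" by (rule conjS[OF S(1) sg k X NSX])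
  have "(W \<odot> S) \<odot> X \<odot> inv (W \<odot> S) = W \<odot> (S \<odot> X \<odot> inv S) \<odot> inv W"
    using unit_mul(2)[OF W(2) S(1)] by (simp add: mul_assoc)
  also have "\<dots> = (S \<odot> X \<odot> inv S) \<odot> W \<odot> inv W"
    using center_comm[OF W(1) grmod4_CC[OF SX]] by simp
  also have "\<dots> = S \<odot> X \<odot> inv S" using conj_id[OF W(2) grmod4_CC[OF SX]] by simp
  finally show ?thesis using SX by simp
qed

lemma Gamma_iff: "T \<in> Gamma n eta k \<longleftrightarrow> unit T \<and> (\<forall>X\<in>grmod4 n k. T \<odot> X \<odot> inv T \<in> grmod4 n k)"
  by (simp add: Gamma_def unit_def)

lemma setP_elim:
  assumes "T \<in> setP n eta"
  obtains W S where "T = W \<odot> S" "W \<in> clcenter n" "unit W" "unit S" "S \<in> cleven n \<or> S \<in> clodd n"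
  using assms unfolding setP_def by (auto simp: center_unit_iff units_iff)

lemma setP_unit: "T \<in> setP n eta \<Longrightarrow> unit T"
  by (erule setP_elim) (simp add: unit_mul)

lemma Q_sub_Gamma:
  fixes T :: "nat set \<Rightarrow> 'a"
  assumes k: "k < 4" and T: "T \<in> setQ n eta" shows "T \<in> Gamma n eta k"
proof -
  have TP: "T \<in> setP n eta" and NZ: "clrev T \<odot> T \<in> clcenter n" using T
    by (auto simp: setQ_def center_unit_iff)
  obtain W S where WS: "T = W \<odot> S" "W \<in> clcenter n" "unit W" "unit S" "S \<in> cleven n \<or> S \<in> clodd n"
    using TP by (rule setP_elim)
  show ?thesis unfolding Gamma_iff
  proof (intro conjI ballI)
    show "unit T" using setP_unit[OF TP] .
    fix X :: "nat set \<Rightarrow> 'a" assume X: "X \<in> grmod4 n k"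
    have "(clrev T \<odot> T) \<odot> X = X \<odot> (clrev T \<odot> T)" using center_comm[OF NZ grmod4_CC[OF X]] .
    thus "T \<odot> X \<odot> inv T \<in> grmod4 n k" unfolding WS(1) using WS(2-5) k X by (intro WS_conj) auto
  qed
qed

lemma Gamma_sub_Q:
  fixes T :: "nat set \<Rightarrow> 'a"
  assumes k: "k < 4" and cent: "\<And>Z. Z \<in> CC \<Longrightarrow> (\<forall>X\<in>grmod4 n k. Z \<odot> X = X \<odot> Z) \<Longrightarrow> Z \<in> clcenter n"
    and T: "T \<in> Gamma n eta k"
  shows "T \<in> setQ n eta"
proof -
  have u: "unit T" using T by (rule gamma_unit)
  have TC: "T \<in> CC" using unitD[OF u] .
  have NZ: "clrev T \<odot> T \<in> clcenter n" using comm_facts(1)[OF k T] by (intro cent) auto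
  have cZ: "inv T \<odot> galpha T \<in> clcenter n" using comm_facts(2)[OF k T] by (intro cent) auto
  have TP: "T \<in> setP n eta" by (rule P_from_c[OF u cZ])
  have uN: "unit (clrev T \<odot> T)" by (rule unit_mul(1)[OF unit_clrev(1)[OF u] u])
  show ?thesis unfolding setQ_def using TP NZ uN by (simp add: center_unit_iff)
qed

end

context clf2 begin

lemma bl_grmod4: "B \<in> PP \<Longrightarrow> card B mod 4 = k \<Longrightarrow> (bl B :: nat set \<Rightarrow> 'a) \<in> grmod4 n k"
  using bl_clalg[of B] unfolding grmod4_def by (auto simp: bl_def)

lemma cent_k:
  fixes Z :: "nat set \<Rightarrow> 'a"
  assumes m: "1 \<le> m" "m < n" "m mod 4 = k" and Z: "Z \<in> CC" and c: "\<forall>X\<in>grmod4 n k. Z \<odot> X = X \<odot> Z"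
    and nz: "Z A \<noteq> 0"
  shows "A = {} \<or> (A = {..<n} \<and> even (m * (n + 1)))"
  using cent_blades[OF m(1,2) Z _ nz] c bl_grmod4 m(3) by auto

lemma cent_center:
  fixes Z :: "nat set \<Rightarrow> 'a"
  assumes m: "1 \<le> m" "m < n" "m mod 4 = k" "odd m \<or> odd n" and Z: "Z \<in> CC"
    and c: "\<forall>X\<in>grmod4 n k. Z \<odot> X = X \<odot> Z"
  shows "Z \<in> clcenter n"
proof -
  have h: "Z A = 0 \<or> A = {} \<or> (A = {..<n} \<and> odd n)" for A
    using cent_k[OF m(1-3) Z c, of A] m(4) by auto
  show ?thesis unfolding center_iff Zs_def using Z h II_ne by auto
qed

lemma cent_Zs:
  fixes Z :: "nat set \<Rightarrow> 'a"
  assumes m: "1 \<le> m" "m < n" "m mod 4 = k" and Z: "Z \<in> CC"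
    and c: "\<forall>X\<in>grmod4 n k. Z \<odot> X = X \<odot> Z"
  shows "Zs Z"
  unfolding Zs_def using Z cent_k[OF m Z c] by auto

lemma cent_Zs_n2:
  fixes Z :: "nat set \<Rightarrow> 'a"
  assumes n: "n = 2" and Z: "Z \<in> CC" and c: "\<forall>X\<in>grmod4 n 2. Z \<odot> X = X \<odot> Z"
  shows "Zs Z"
proof -
  have II2: "II \<in> grmod4 n 2" using n by (intro bl_grmod4) auto
  have cI: "Z \<odot> II = II \<odot> Z" using c II2 by blast
  { fix A assume nz: "Z A \<noteq> 0"
    have A: "A \<in> PP" using clalg_PP[OF Z nz] .
    have par: "even (card A * n + card A)"
      using comm_bl_parity[OF Z II_PP cI nz] A by (simp add: Int_absorb2)
    have "card A \<le> 2" using A n card_mono[of "{..<n}" A] by auto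
    moreover have "odd (card A * 2 + card A)" if "card A = 1" using that by simp
    ultimately have "card A = 0 \<or> card A = 2" using par n by (cases "card A") (auto, presburger)
    hence "A = {} \<or> A = {..<n}"
    proof
      assume "card A = 0" thus ?thesis using PP_fin[OF A] by simp
    next
      assume "card A = 2" thus ?thesis using A n by (intro disjI2 card_subset_eq) auto
    qed }
  thus ?thesis using Z by (auto simp: Zs_def)
qed

lemma galpha_II_even: "even n \<Longrightarrow> galpha II = II"
  by (rule ext) (simp add: galpha_def bl_def)

lemma clrev_II: "clrev II = fsc (eps4 n) II"
proof
  fix A show "clrev II A = fsc (eps4 n) II A"
  proof (cases "A = {..<n}")
    case True thus ?thesis by (simp add: clrev_eps bl_def)
  qed (simp add: clrev_def bl_def)
qed

lemma Gamma_even: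
  fixes T :: "nat set \<Rightarrow> 'a"
  assumes en: "even n" and k: "k < 4" and cent: "\<And>Z. Z \<in> CC \<Longrightarrow> \<forall>X\<in>grmod4 n k. Z \<odot> X = X \<odot> Z \<Longrightarrow> Zs Z"
    and T: "T \<in> Gamma n eta k"
  shows "(T \<in> cleven n \<or> T \<in> clodd n) \<and> Zs (clrev T \<odot> T)"
proof
  have u: "unit T" using T by (rule gamma_unit)
  have TC: "T \<in> CC" using unitD[OF u] .
  show "Zs (clrev T \<odot> T)" using comm_facts(1)[OF k T] by (intro cent) auto
  define cc where "cc = inv T \<odot> galpha T"
  have Zc: "Zs cc" using comm_facts(2)[OF k T] unfolding cc_def by (intro cent) auto
  have aT: "galpha T = T \<odot> cc" using conj_id[OF u, of "galpha T"] TC by (simp add: cc_def)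
  define c0 where "c0 = cc {}"
  define c1 where "c1 = cc {..<n}"
  have cdec: "cc = fsc c0 clone \<oplus> fsc c1 II" unfolding c0_def c1_def by (rule Zs_decomp[OF Zc])
  have gc: "galpha cc = cc" unfolding cdec using galpha_II_even[OF en] by simp
  have ccC: "cc \<in> CC" unfolding cdec by simp
  have "T \<odot> clone = T \<odot> (cc \<odot> cc)"
  proof -
    have "T = galpha (galpha T)" by simp
    also have "\<dots> = T \<odot> (cc \<odot> cc)" by (simp only: aT galpha_mul gc mul_assoc)
    finally show ?thesis using TC by simp
  qed
  hence "inv T \<odot> (T \<odot> clone) = inv T \<odot> (T \<odot> (cc \<odot> cc))" by simp
  hence "cc \<odot> cc = clone" using conj_id(1)[OF u] ccC by simp
  hence sq: "fsc (c0 * c0 + c1 * c1 * sI) clone \<oplus> fsc (c0 * c1 + c1 * c0) II = clone"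
    unfolding cdec span_mul .
  have "c0 * c1 + c1 * c0 = 0"
    using fun_cong[OF sq, of "{..<n}"] II_ne by (simp add: clone_def bl_def)
  hence "c0 * c1 = 0" by simp
  hence "c1 = 0 \<or> c0 = 0" by auto
  thus "T \<in> cleven n \<or> T \<in> clodd n"
  proof
    assume "c1 = 0"
    hence "galpha T = fsc c0 T" using aT cdec TC by (simp add: mul_add_right mul_sc_right)
    thus ?thesis by (rule alpha_scalar[OF u])
  next
    assume c00: "c0 = 0"
    have ga: "galpha T = fsc c1 (II \<odot> galpha T)"
      using aT cdec TC c00 II_comm_even[OF en, of T] by (simp add: mul_add_right mul_sc_right)
    have "(clone \<oplus> fsc (- c1) II) \<odot> galpha T = zf"
    proof -
      have "(clone \<oplus> fsc (- c1) II) \<odot> galpha T = galpha T \<oplus> fsc (- c1) (II \<odot> galpha T)"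
        using TC by (simp add: mul_add_left mul_sc_left)
      also have "\<dots> = zf"
      proof
        fix x
        have "galpha T x = c1 * (II \<odot> galpha T) x" using fun_cong[OF ga, of x] by simp
        thus "(galpha T \<oplus> fsc (- c1) (II \<odot> galpha T)) x = zf x" by (simp add: zf_def)
      qed
      finally show ?thesis .
    qed
    hence "clone \<oplus> fsc (- c1) II = zf" using cancelR[OF unit_galpha(1)[OF u]] by simp
    hence "(clone \<oplus> fsc (- c1) II) {} = zf {}" by simp
    hence False using II_ne by (simp add: clone_def bl_def zf_def)
    thus ?thesis ..
  qed
qed

end

context clf2 begin

lemma G_center_eq:
  assumes m: "1 \<le> m" "m < n" "m mod 4 = k" "odd m \<or> odd n"
  shows "Gamma n eta k = (setQ n eta :: (nat set \<Rightarrow> 'a) set)"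
proof -
  have k: "k < 4" using m(3) by auto
  show ?thesis
  proof
    show "Gamma n eta k \<subseteq> setQ n eta"
      using Gamma_sub_Q[OF k] cent_center[OF m] by blast
    show "setQ n eta \<subseteq> Gamma n eta k" using Q_sub_Gamma[OF k] by blast
  qed
qed

lemma G1_eq: "Gamma n eta 1 = (setQ n eta :: (nat set \<Rightarrow> 'a) set)"
  using n2 by (intro G_center_eq[of 1]) auto
lemma G3_eq: "n \<ge> 4 \<Longrightarrow> Gamma n eta 3 = (setQ n eta :: (nat set \<Rightarrow> 'a) set)"
  by (intro G_center_eq[of 3]) auto
lemma G0_odd: "odd n \<Longrightarrow> n \<ge> 5 \<Longrightarrow> Gamma n eta 0 = (setQ n eta :: (nat set \<Rightarrow> 'a) set)"
  by (intro G_center_eq[of 4]) auto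
lemma G2_odd: "odd n \<Longrightarrow> n \<ge> 3 \<Longrightarrow> Gamma n eta 2 = (setQ n eta :: (nat set \<Rightarrow> 'a) set)"
  by (intro G_center_eq[of 2]) auto

lemma rev_top_zero:
  fixes N :: "nat set \<Rightarrow> 'a"
  assumes "clrev N = N" "eps4 n = (-1::'a)" shows "N {..<n} = 0"
proof -
  have "N {..<n} = eps4 n * N {..<n}" using fun_cong[OF assms(1), of "{..<n}"] by (simp add: clrev_eps)
  hence "N {..<n} = - N {..<n}" using assms(2) by simp
  thus ?thesis by (simp add: eq_neg_iff_add_eq_0)
qed

lemma rev_sq_fixed: "clrev (clrev T \<odot> T) = clrev T \<odot> (T :: nat set \<Rightarrow> 'a)"
  by (simp add: clrev_mul)

lemma cent_Zs_k:
  fixes Z :: "nat set \<Rightarrow> 'a"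
  assumes "k = 2 \<or> (k = 0 \<and> n \<ge> 5)" "Z \<in> CC" "\<forall>X\<in>grmod4 n k. Z \<odot> X = X \<odot> Z"
  shows "Zs Z"
proof (cases "n = 2 \<and> k = 2")
  case True thus ?thesis using cent_Zs_n2 assms by auto
next
  case False
  show ?thesis
  proof (cases "k = 2")
    case True
    with False n2 have "n \<ge> 3" by auto
    thus ?thesis using cent_Zs[of 2 k Z] assms True by auto
  next
    case False
    thus ?thesis using cent_Zs[of 4 k Z] assms by auto
  qed
qed

lemma G_2mod4:
  assumes nm: "n mod 4 = 2" and k: "k = 2 \<or> (k = 0 \<and> n \<ge> 5)"
  shows "Gamma n eta k = (setQ n eta :: (nat set \<Rightarrow> 'a) set)"
proof
  have k4: "k < 4" using k by auto
  have en: "even n" using nm by presburger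
  have ep: "eps4 n = (-1::'a)" using nm by (simp add: eps4_def)
  show "setQ n eta \<subseteq> Gamma n eta k" using Q_sub_Gamma[OF k4] by blast
  show "Gamma n eta k \<subseteq> setQ n eta"
  proof
    fix T :: "nat set \<Rightarrow> 'a" assume T: "T \<in> Gamma n eta k"
    have u: "unit T" using T by (rule gamma_unit)
    have h: "(T \<in> cleven n \<or> T \<in> clodd n) \<and> Zs (clrev T \<odot> T)"
      by (rule Gamma_even[OF en k4 _ T]) (use cent_Zs_k[OF k] in blast)
    have "(clrev T \<odot> T) {..<n} = 0" by (rule rev_top_zero[OF rev_sq_fixed ep])
    hence NZ: "clrev T \<odot> T \<in> clcenter n" using h by (simp add: center_iff)
    have uN: "unit (clrev T \<odot> T)" by (rule unit_mul(1)[OF unit_clrev(1)[OF u] u])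
    have "T \<in> setP n eta" using evenodd_setP[OF u] h by blast
    thus "T \<in> setQ n eta" unfolding setQ_def using NZ uN by (simp add: center_unit_iff)
  qed
qed

lemma Q'_iff: "(T :: nat set \<Rightarrow> 'a) \<in> setQ' n eta \<longleftrightarrow> T \<in> setP n eta \<and> Zs (clrev T \<odot> T) \<and> unit (clrev T \<odot> T)"
  by (simp add: setQ'_def units_iff ssum_iff)

lemma Zs_comm_even:
  fixes N X :: "nat set \<Rightarrow> 'a"
  assumes en: "even n" and N: "Zs N" and X: "X \<in> cleven n"
  shows "N \<odot> X = X \<odot> N"
proof -
  have XC: "X \<in> CC" and gX: "galpha X = X" using X by (auto simp: cleven_iff)
  have cI: "II \<odot> X = X \<odot> II" using II_comm_even[OF en, of X] gX by simp
  show ?thesis by (subst (1 2) Zs_decomp[OF N]) (simp add: mul_add_left mul_add_right mul_sc_left mul_sc_right XC cI)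
qed

lemma grmod4_even: "k \<in> {0, 2} \<Longrightarrow> X \<in> grmod4 n k \<Longrightarrow> (X :: nat set \<Rightarrow> 'a) \<in> cleven n"
proof -
  assume k: "k \<in> {0, 2}" and X: "X \<in> grmod4 n k"
  { fix A :: "nat set" assume "odd (card A)"
    hence "card A mod 4 \<noteq> k" using k by auto presburger+
    hence "X A = 0" using X by (simp add: grmod4_def) }
  thus ?thesis using X by (simp add: grmod4_def cleven_def)
qed

lemma Q'_sub_G:
  assumes en: "even n" and k: "k \<in> {0, 2}" and T: "(T :: nat set \<Rightarrow> 'a) \<in> setQ' n eta"
  shows "T \<in> Gamma n eta k"
proof -
  have k4: "k < 4" using k by auto
  have TP: "T \<in> setP n eta" and NZ: "Zs (clrev T \<odot> T)" using T by (auto simp: Q'_iff)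
  obtain W S where WS: "T = W \<odot> S" "W \<in> clcenter n" "unit W" "unit S" "S \<in> cleven n \<or> S \<in> clodd n"
    using TP by (rule setP_elim)
  show ?thesis unfolding Gamma_iff
  proof (intro conjI ballI)
    show "unit T" using setP_unit[OF TP] .
    fix X :: "nat set \<Rightarrow> 'a" assume X: "X \<in> grmod4 n k"
    have "(clrev T \<odot> T) \<odot> X = X \<odot> (clrev T \<odot> T)" by (rule Zs_comm_even[OF en NZ grmod4_even[OF k X]])
    thus "T \<odot> X \<odot> inv T \<in> grmod4 n k" unfolding WS(1) using WS(2-5) k4 X by (intro WS_conj) auto
  qed
qed

lemma G_0mod4_sub:
  assumes nm: "n mod 4 = 0" and k: "k = 2 \<or> (k = 0 \<and> n \<ge> 5)"
  shows "Gamma n eta k \<subseteq> (setQ' n eta :: (nat set \<Rightarrow> 'a) set)"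
proof
  have k4: "k < 4" using k by auto
  have en: "even n" using nm by presburger
  fix T :: "nat set \<Rightarrow> 'a" assume T: "T \<in> Gamma n eta k"
  have u: "unit T" using T by (rule gamma_unit)
  have h: "(T \<in> cleven n \<or> T \<in> clodd n) \<and> Zs (clrev T \<odot> T)"
    by (rule Gamma_even[OF en k4 _ T]) (use cent_Zs_k[OF k] in blast)
  have uN: "unit (clrev T \<odot> T)" by (rule unit_mul(1)[OF unit_clrev(1)[OF u] u])
  have "T \<in> setP n eta" using evenodd_setP[OF u] h by blast
  thus "T \<in> setQ' n eta" using h uN by (simp add: Q'_iff)
qed

end

context clf2 begin

lemma N_grmod0:
  fixes T :: "nat set \<Rightarrow> 'a"
  assumes "T \<in> cleven n \<or> T \<in> clodd n" shows "clrev T \<odot> T \<in> grmod4 n 0"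
proof -
  have "galpha (clrev T \<odot> T) = clrev T \<odot> T" using assms
    by (auto simp: cleven_iff clodd_iff galpha_mul galpha_clrev mul_sc_left mul_sc_right)
  moreover have "(0::nat) < 4" by simp
  ultimately show ?thesis unfolding grmod4_iff[OF \<open>(0::nat) < 4\<close>] by (simp add: clrev_mul eps4_def)
qed

lemma card_le_n: "A \<in> PP \<Longrightarrow> card A \<le> n"
  using card_mono[of "{..<n}" A] by auto

lemma eq_top: "A \<in> PP \<Longrightarrow> card A = n \<Longrightarrow> A = {..<n}"
  by (intro card_subset_eq) auto

lemma n4_G0:
  assumes n4: "n = 4"
  shows "Gamma n eta 0 \<subseteq> (setQ' n eta :: (nat set \<Rightarrow> 'a) set)"
proof
  fix T :: "nat set \<Rightarrow> 'a" assume T: "T \<in> Gamma n eta 0"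
  have u: "unit T" using T by (rule gamma_unit)
  have TC: "T \<in> CC" using unitD[OF u] .
  have en: "even n" using n4 by simp
  have Zs0: "Zs X" if X: "X \<in> grmod4 n 0" for X :: "nat set \<Rightarrow> 'a"
  proof -
    { fix A assume nz: "X A \<noteq> 0"
      hence A: "A \<in> PP" "card A mod 4 = 0" using X by (auto simp: grmod4_def clalg_def)
      hence "card A = 0 \<or> card A = 4" using card_le_n[OF A(1)] n4 by auto
      hence "A = {} \<or> A = {..<n}" using PP_fin[OF A(1)] eq_top[OF A(1)] n4 by auto }
    thus ?thesis using X grmod4_CC by (auto simp: Zs_def)
  qed
  have IIg: "II \<in> grmod4 n 0" using n4 by (intro bl_grmod4) auto
  define Y where "Y = T \<odot> II \<odot> inv T"
  have Yg: "Y \<in> grmod4 n 0" using T IIg by (auto simp: Gamma_iff Y_def)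
  have ZY: "Zs Y" by (rule Zs0[OF Yg])
  define y0 where "y0 = Y {}"
  define y1 where "y1 = Y {..<n}"
  have Ydec: "Y = fsc y0 clone \<oplus> fsc y1 II" unfolding y0_def y1_def by (rule Zs_decomp[OF ZY])
  have "Y \<odot> Y = T \<odot> (II \<odot> II) \<odot> inv T"
    unfolding Y_def using conj_id[OF u] by (simp add: mul_assoc)
  also have "\<dots> = fsc sI clone" using inv_props[OF u] by (simp add: II_sq sI_def mul_sc_left mul_sc_right mul_assoc[symmetric] TC)
  finally have E: "fsc (y0 * y0 + y1 * y1 * sI) clone \<oplus> fsc (y0 * y1 + y1 * y0) II = fsc sI clone"
    unfolding Ydec span_mul .
  have "(fsc (y0 * y0 + y1 * y1 * sI) clone \<oplus> fsc (y0 * y1 + y1 * y0) II) {..<n} = fsc sI clone {..<n}"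
    using E by simp
  hence "y0 * y1 + y1 * y0 = 0" using II_ne by (simp only: span_coeffs) (simp add: clone_def)
  hence "y0 = 0 \<or> y1 = 0" by auto
  have IIY: "II = inv T \<odot> Y \<odot> T" unfolding Y_def using conj_id[OF u] by (simp add: mul_assoc)
  have "galpha T = fsc y1 T"
  proof (cases "y1 = 0")
    case True
    have Y0: "Y = fsc y0 clone" using Ydec True by simp
    have "II = inv T \<odot> fsc y0 clone \<odot> T" using IIY Y0 by simp
    also have "\<dots> = fsc y0 clone" using inv_props[OF u] by (simp add: mul_sc_left mul_sc_right)
    finally have "II = fsc y0 clone" .
    hence "II {..<n} = fsc y0 clone {..<n}" by simp
    hence False using II_ne by (simp add: bl_def clone_def)
    thus ?thesis by (rule FalseE)
  next
    case False
    with \<open>y0 = 0 \<or> y1 = 0\<close> have "y0 = 0" by simp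
    hence Y1: "T \<odot> II \<odot> inv T = fsc y1 II" using Ydec unfolding Y_def by simp
    have "II \<odot> galpha T = T \<odot> II" using II_comm_even[OF en, of T] by simp
    also have "\<dots> = (T \<odot> II \<odot> inv T) \<odot> T" using conj_id(4)[OF u, of "T \<odot> II"] by simp
    also have "\<dots> = fsc y1 II \<odot> T" unfolding Y1 ..
    finally have "II \<odot> galpha T = II \<odot> fsc y1 T" by (simp add: mul_sc_left mul_sc_right)
    hence "inv II \<odot> (II \<odot> galpha T) = inv II \<odot> (II \<odot> fsc y1 T)" by simp
    thus ?thesis using conj_id(1)[OF II_unit(1)] TC by simp
  qed
  from alpha_scalar[OF u this] have eo: "T \<in> cleven n \<or> T \<in> clodd n" .
  have uN: "unit (clrev T \<odot> T)" by (rule unit_mul(1)[OF unit_clrev(1)[OF u] u])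
  have "T \<in> setP n eta" using evenodd_setP[OF u eo] .
  thus "T \<in> setQ' n eta" using Zs0[OF N_grmod0[OF eo]] uN by (simp add: Q'_iff)
qed

lemma sI_cases: "sI = 1 \<or> sI = (-1 :: 'a)"
proof -
  have "(sI - 1) * (sI + 1) = (0::'a)" using sI_sq by (simp add: algebra_simps)
  thus ?thesis by (auto simp: eq_neg_iff_add_eq_0)
qed

lemma Q_ne_Q':
  assumes nm: "n mod 4 = 0"
  shows "setQ n eta \<noteq> (setQ' n eta :: (nat set \<Rightarrow> 'a) set)"
proof -
  have en: "even n" using nm by presburger
  define T0 :: "nat set \<Rightarrow> 'a" where "T0 = fsc 2 clone \<oplus> fsc 1 II"
  define U :: "nat set \<Rightarrow> 'a" where "U = fsc 2 clone \<oplus> fsc (-1) II"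
  have d: "4 - sI \<noteq> (0::'a)" using sI_cases by auto
  have TU: "T0 \<odot> U = fsc (4 - sI) clone" "U \<odot> T0 = fsc (4 - sI) clone"
    unfolding T0_def U_def span_mul by (rule ext, simp)+
  have uT: "unit T0"
  proof (rule unitI)
    show "T0 \<in> CC" "fsc (1 / (4 - sI)) U \<in> CC" by (simp_all add: T0_def U_def)
    show "T0 \<odot> fsc (1 / (4 - sI)) U = clone" "fsc (1 / (4 - sI)) U \<odot> T0 = clone"
      using TU d by (simp_all add: mul_sc_left mul_sc_right)
  qed
  have eT: "T0 \<in> cleven n" unfolding cleven_iff T0_def using galpha_II_even[OF en] by simp
  have rT: "clrev T0 = T0" unfolding T0_def using nm by (simp add: clrev_II eps4_def)
  have N: "clrev T0 \<odot> T0 = fsc (4 + sI) clone \<oplus> fsc 4 II"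
  proof -
    have "clrev T0 \<odot> T0 = T0 \<odot> T0" using rT by simp
    also have "\<dots> = fsc (4 + sI) clone \<oplus> fsc 4 II" unfolding T0_def span_mul by simp
    finally show ?thesis .
  qed
  have uN: "unit (clrev T0 \<odot> T0)" by (rule unit_mul(1)[OF unit_clrev(1)[OF uT] uT])
  have TP: "T0 \<in> setP n eta" using evenodd_setP[OF uT] eT by blast
  have "T0 \<in> setQ' n eta" using TP uN Zs_span by (simp add: Q'_iff N)
  moreover have "T0 \<notin> setQ n eta"
  proof
    assume "T0 \<in> setQ n eta"
    hence "clrev T0 \<odot> T0 \<in> clcenter n" by (simp add: setQ_def center_unit_iff)
    hence "(clrev T0 \<odot> T0) {..<n} = 0" using en by (simp add: center_iff)
    thus False unfolding N span_coeffs by simp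
  qed
  ultimately show ?thesis by blast
qed

lemma Gamma_triv:
  assumes "\<And>X T. X \<in> grmod4 n k \<Longrightarrow> unit T \<Longrightarrow> T \<odot> X \<odot> inv T = (X :: nat set \<Rightarrow> 'a)"
  shows "Gamma n eta k = clunits n eta CC"
  using assms by (auto simp: Gamma_iff unit_def)

lemma G0_small:
  assumes "n \<le> 3" shows "Gamma n eta 0 = (clunits n eta CC :: (nat set \<Rightarrow> 'a) set)"
proof (rule Gamma_triv)
  fix X T :: "nat set \<Rightarrow> 'a" assume X: "X \<in> grmod4 n 0" and u: "unit T"
  { fix A assume nz: "X A \<noteq> 0"
    hence A: "A \<in> PP" "card A mod 4 = 0" using X by (auto simp: grmod4_def clalg_def)
    hence "card A = 0" using card_le_n[OF A(1)] assms by auto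
    hence "A = {}" using PP_fin[OF A(1)] by simp }
  hence XX: "X = fsc (X {}) clone" by (auto simp: fun_eq_iff clone_def)
  have "T \<odot> fsc (X {}) clone \<odot> inv T = fsc (X {}) (T \<odot> inv T)"
    using unitD[OF u] by (simp add: mul_sc_left mul_sc_right)
  also have "\<dots> = fsc (X {}) clone" using inv_props[OF u] by simp
  finally show "T \<odot> X \<odot> inv T = X" using XX by simp
qed

lemma G3_n3:
  assumes "n = 3" shows "Gamma n eta 3 = (clunits n eta CC :: (nat set \<Rightarrow> 'a) set)"
proof (rule Gamma_triv)
  fix X T :: "nat set \<Rightarrow> 'a" assume X: "X \<in> grmod4 n 3" and u: "unit T"
  have XC: "X \<in> CC" using X by (rule grmod4_CC)
  have h: "X A = 0 \<or> A = {..<n}" for A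
  proof (cases "X A = 0")
    case False
    hence A: "A \<in> PP" "card A mod 4 = 3" using X by (auto simp: grmod4_def clalg_def)
    hence "card A = n" using card_le_n[OF A(1)] assms by auto
    thus ?thesis using eq_top[OF A(1)] by simp
  qed simp
  have on: "odd n" using assms by simp
  have XZ: "X \<in> clcenter n" unfolding center_iff Zs_def using XC on h by blast
  show "T \<odot> X \<odot> inv T = X" using center_comm[OF XZ unitD[OF u]] conj_id[OF u XC] by simp
qed

end

context clf2 begin

lemma NT_split:
  fixes W S :: "nat set \<Rightarrow> 'a"
  assumes W: "W \<in> clcenter n" and S: "S \<in> CC"
  shows "clrev (W \<odot> S) \<odot> (W \<odot> S) = (clrev W \<odot> W) \<odot> (clrev S \<odot> S)"
proof -
  have MZ: "clrev W \<odot> W \<in> clcenter n" by (intro center_mul center_clrev W)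
  have "clrev (W \<odot> S) \<odot> (W \<odot> S) = clrev S \<odot> ((clrev W \<odot> W) \<odot> S)" by (simp add: clrev_mul mul_assoc)
  also have "\<dots> = (clrev W \<odot> W) \<odot> (clrev S \<odot> S)" using center_comm[OF MZ, of "clrev S"] S
    by (simp add: mul_assoc[symmetric])
  finally show ?thesis .
qed

lemma small_grmod0_center:
  fixes X :: "nat set \<Rightarrow> 'a"
  assumes "n \<le> 3" "X \<in> grmod4 n 0" shows "X \<in> clcenter n"
proof -
  have h: "X A = 0 \<or> A = {}" for A
  proof (cases "X A = 0")
    case False
    hence A: "A \<in> PP" "card A mod 4 = 0" using assms(2) by (auto simp: grmod4_def clalg_def)
    hence "card A = 0" using card_le_n[OF A(1)] assms(1) by auto
    thus ?thesis using PP_fin[OF A(1)] by simp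
  qed simp
  show ?thesis unfolding center_iff Zs_def using grmod4_CC[OF assms(2)] h II_ne by blast
qed

lemma P_sub_Q_small:
  assumes "n \<le> 3" shows "setP n eta \<subseteq> (setQ n eta :: (nat set \<Rightarrow> 'a) set)"
proof
  fix T :: "nat set \<Rightarrow> 'a" assume TP: "T \<in> setP n eta"
  obtain W S where WS: "T = W \<odot> S" "W \<in> clcenter n" "unit W" "unit S" "S \<in> cleven n \<or> S \<in> clodd n"
    using TP by (rule setP_elim)
  have u: "unit T" using setP_unit[OF TP] .
  have "clrev T \<odot> T = (clrev W \<odot> W) \<odot> (clrev S \<odot> S)" unfolding WS(1) by (rule NT_split[OF WS(2) unitD[OF WS(4)]])
  moreover have "clrev W \<odot> W \<in> clcenter n" by (intro center_mul center_clrev WS(2))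
  moreover have "clrev S \<odot> S \<in> clcenter n" by (rule small_grmod0_center[OF assms N_grmod0[OF WS(5)]])
  ultimately have NZ: "clrev T \<odot> T \<in> clcenter n" using center_mul by simp
  have uN: "unit (clrev T \<odot> T)" by (rule unit_mul(1)[OF unit_clrev(1)[OF u] u])
  show "T \<in> setQ n eta" unfolding setQ_def using TP NZ uN by (simp add: center_unit_iff)
qed

lemma setP_even_n:
  fixes T :: "nat set \<Rightarrow> 'a"
  assumes en: "even n" and TP: "T \<in> setP n eta"
  shows "T \<in> clunits n eta (cleven n) \<union> clunits n eta (clodd n)"
proof -
  obtain W S where WS: "T = W \<odot> S" "W \<in> clcenter n" "unit W" "unit S" "S \<in> cleven n \<or> S \<in> clodd n"
    using TP by (rule setP_elim)
  have u: "unit T" using setP_unit[OF TP] .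
  have ZW: "Zs W" "W {..<n} = 0" using WS(2) en by (auto simp: center_iff)
  have Wd: "W = fsc (W {}) clone" using Zs_decomp[OF ZW(1)] ZW(2) by simp
  have T': "T = fsc (W {}) S" unfolding WS(1) using unitD[OF WS(4)] by (subst Wd) (simp add: mul_sc_left)
  have "T \<in> cleven n \<or> T \<in> clodd n" using WS(5) unitD[OF WS(4)] unfolding T'
    by (auto simp: cleven_iff clodd_iff)
  thus ?thesis using u by (auto simp: units_iff)
qed

lemma blade_span_mul:
  assumes B: "B \<in> PP"
  shows "(fsc a clone \<oplus> fsc b (bl B)) \<odot> (fsc c clone \<oplus> fsc d (bl B)) =
     fsc (a * c + b * d * bsign eta B B) clone \<oplus> fsc (a * d + b * c) (bl B :: nat set \<Rightarrow> 'a)"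
  using B
  apply (simp add: mul_add_left mul_add_right mul_sc_left mul_sc_right bl_mul_bl clone_bl[symmetric])
  apply (rule ext)
  apply (simp add: algebra_simps)
  done

definition T1 :: "nat set \<Rightarrow> 'a" where "T1 = fsc 2 clone \<oplus> fsc 1 (bl {0})"

lemma T1_facts: "unit T1" "T1 {} = 2" "T1 {0} = 1" "T1 \<notin> cleven n" "T1 \<notin> clodd n"
proof -
  have B: "{0} \<in> PP" using n2 by auto
  define e where "e = bsign eta {0} {0}"
  have e: "e = 1 \<or> e = -1"
  proof -
    have "(e - 1) * (e + 1) = 0" using bsign_sq[of "{0}" "{0}"] by (simp add: e_def algebra_simps)
    thus ?thesis by (auto simp: eq_neg_iff_add_eq_0)
  qed
  define U :: "nat set \<Rightarrow> 'a" where "U = fsc 2 clone \<oplus> fsc (-1) (bl {0})"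
  have d: "4 - e \<noteq> (0::'a)" using e by auto
  have TU: "T1 \<odot> U = fsc (4 - e) clone" "U \<odot> T1 = fsc (4 - e) clone"
    unfolding T1_def U_def blade_span_mul[OF B] e_def[symmetric] by (rule ext, simp)+
  show "unit T1"
  proof (rule unitI)
    show "T1 \<in> CC" "fsc (1 / (4 - e)) U \<in> CC" using B by (simp_all add: T1_def U_def)
    show "T1 \<odot> fsc (1 / (4 - e)) U = clone" "fsc (1 / (4 - e)) U \<odot> T1 = clone"
      using TU d by (simp_all add: mul_sc_left mul_sc_right)
  qed
  show "T1 {} = 2" "T1 {0} = 1" by (simp_all add: T1_def clone_def bl_def)
  show "T1 \<notin> cleven n"
  proof
    assume "T1 \<in> cleven n" hence "T1 {0} = 0" by (simp add: cleven_def)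
    thus False using \<open>T1 {0} = 1\<close> by simp
  qed
  show "T1 \<notin> clodd n"
  proof
    assume "T1 \<in> clodd n" hence "T1 {} = 0" by (simp add: clodd_def)
    thus False using \<open>T1 {} = 2\<close> by simp
  qed
qed

lemma n2_ne: "clunits n eta (cleven n) \<union> clunits n eta (clodd n) \<noteq> (clunits n eta CC :: (nat set \<Rightarrow> 'a) set)"
proof -
  have "T1 \<in> clunits n eta CC" using T1_facts(1) by (simp add: unit_def)
  moreover have "T1 \<notin> clunits n eta (cleven n) \<union> clunits n eta (clodd n)" using T1_facts(4,5) by (auto simp: units_iff)
  ultimately show ?thesis by blast
qed

lemma galpha_II_odd: "odd n \<Longrightarrow> galpha II = fsc (-1) II"
  by (rule ext) (simp add: galpha_def bl_def)

lemma II_center_odd: "odd n \<Longrightarrow> II \<in> clcenter n"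
  unfolding center_iff Zs_def using bl_clalg[OF II_PP] by (auto simp: bl_def)

lemma n3_setP:
  assumes on: "odd n"
  shows "setP n eta = {W \<odot> T |W T. W \<in> clunits n eta (clcenter n) \<and> T \<in> clunits n eta (cleven n)}"
    (is "_ = ?R")
proof
  show "?R \<subseteq> setP n eta" unfolding setP_def by blast
  show "setP n eta \<subseteq> ?R"
  proof
    fix T :: "nat set \<Rightarrow> 'a" assume TP: "T \<in> setP n eta"
    obtain W S where WS: "T = W \<odot> S" "W \<in> clcenter n" "unit W" "unit S" "S \<in> cleven n \<or> S \<in> clodd n"
      using TP by (rule setP_elim)
    show "T \<in> ?R"
    proof (cases "S \<in> cleven n")
      case True
      thus ?thesis using WS by (auto simp: center_unit_iff units_iff)
    next
      case False
      hence So: "S \<in> clodd n" using WS(5) by simp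
      have SC: "S \<in> CC" using unitD[OF WS(4)] .
      define S2 where "S2 = inv II \<odot> S"
      have uS2: "unit S2" unfolding S2_def by (rule unit_mul(1)[OF unit_inv(1)[OF II_unit(1)] WS(4)])
      have eS2: "S2 \<in> cleven n"
      proof -
        have "galpha S = fsc (-1) S" using So by (simp add: clodd_iff)
        hence "galpha S2 = S2" unfolding S2_def II_unit(2) using galpha_II_odd[OF on]
          by (simp add: galpha_mul mul_sc_left mul_sc_right)
        thus ?thesis using unitD[OF uS2] by (simp add: cleven_iff)
      qed
      have IZ: "II \<in> clcenter n" by (rule II_center_odd[OF on])
      have WIZ: "W \<odot> II \<in> clcenter n" by (rule center_mul[OF WS(2) IZ])
      have uWI: "unit (W \<odot> II)" by (rule unit_mul(1)[OF WS(3) II_unit(1)])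
      have "T = (W \<odot> II) \<odot> S2" unfolding WS(1) S2_def using conj_id(2)[OF II_unit(1) SC] by (simp add: mul_assoc)
      thus ?thesis using WIZ uWI uS2 eS2 by (auto simp: center_unit_iff units_iff)
    qed
  qed
qed

lemma ep_odd_zf: "X \<in> clodd n \<Longrightarrow> ep X = (zf :: nat set \<Rightarrow> 'a)"
  by (rule ext) (auto simp: clodd_def ep_def zf_def)
lemma ep_even_id: "X \<in> cleven n \<Longrightarrow> ep X = (X :: nat set \<Rightarrow> 'a)"
  by (rule ext) (auto simp: cleven_def ep_def)

lemma n3_ne:
  assumes on: "odd n"
  shows "{W \<odot> T |W T. W \<in> clunits n eta (clcenter n) \<and> T \<in> clunits n eta (cleven n)} \<noteq> (clunits n eta CC :: (nat set \<Rightarrow> 'a) set)"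
proof
  assume eq: "{W \<odot> T |W T. W \<in> clunits n eta (clcenter n) \<and> T \<in> clunits n eta (cleven n)} = clunits n eta CC"
  have "T1 \<in> clunits n eta CC" using T1_facts(1) by (simp add: unit_def)
  hence "T1 \<in> {W \<odot> T |W T. W \<in> clunits n eta (clcenter n) \<and> T \<in> clunits n eta (cleven n)}" using eq by simp
  then obtain W S where WS0: "T1 = W \<odot> S" "W \<in> clunits n eta (clcenter n)" "S \<in> clunits n eta (cleven n)"
    by blast
  hence WS: "T1 = W \<odot> S" "W \<in> clcenter n" "S \<in> cleven n" "unit S"
    by (auto simp: center_unit_iff units_iff)
  have SC: "S \<in> CC" using unitD[OF WS(4)] .
  have ZW: "Zs W" using WS(2) by (simp add: center_iff)
  define a where "a = W {}"
  define b where "b = W {..<n}"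
  have WS2: "T1 = fsc a S \<oplus> fsc b (S \<odot> II)"
    unfolding WS(1) a_def b_def using center_comm[OF II_center_odd[OF on] SC]
    by (subst Zs_decomp[OF ZW]) (simp add: mul_add_left mul_sc_left SC)
  have opS: "op S = zf" using WS(3) by (rule_tac ext) (auto simp: cleven_def op_def zf_def)
  have "ep T1 = fsc a S" unfolding WS2 ep_add ep_sc ep_mulII[OF on] opS ep_even_id[OF WS(3)] by simp
  moreover have "ep T1 = fsc 2 clone" by (rule ext) (simp add: T1_def ep_def clone_def bl_def)
  ultimately have aS: "fsc a S = fsc 2 clone" by simp
  have a0: "a \<noteq> 0"
  proof
    assume "a = 0"
    hence "fsc 2 clone {} = (zf :: nat set \<Rightarrow> 'a) {}" using aS by simp
    thus False by (simp add: clone_def zf_def)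
  qed
  have Sd: "S = fsc (2 / a) clone"
  proof -
    have "S = fsc (1 / a) (fsc a S)" using a0 by simp
    thus ?thesis unfolding aS by simp
  qed
  have "T1 {0} = (fsc a S \<oplus> fsc b (S \<odot> II)) {0}" unfolding WS2 ..
  also have "\<dots> = 0"
  proof -
    have SI: "S \<odot> II = fsc (2 / a) II" unfolding Sd by (simp add: mul_sc_left)
    have ne: "{0::nat} \<noteq> {..<n}" using n2 by (metis One_nat_def lessThan_iff less_le_trans one_less_numeral_iff semiring_norm(76) singletonD zero_neq_one)
    show ?thesis unfolding SI unfolding Sd using ne by (simp add: clone_def bl_def)
  qed
  finally show False using T1_facts(3) by simp
qed

end

context clf2 begin

lemma Q_sub_P: "setQ n eta \<subseteq> (setP n eta :: (nat set \<Rightarrow> 'a) set)" by (auto simp: setQ_def)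

lemma claims: "gamma_claims n eta"
proof -
  have c1: "n \<ge> 4 \<and> n mod 4 = 0 \<longrightarrow>
       setQ n eta = Gamma n eta 1 \<and> Gamma n eta 1 = Gamma n eta 3 \<and>
       setQ' n eta = Gamma n eta 0 \<and> Gamma n eta 0 = Gamma n eta 2 \<and>
       setQ n eta \<noteq> setQ' n eta"
  proof
    assume h: "n \<ge> 4 \<and> n mod 4 = 0"
    have en: "even n" using h by presburger
    have g0: "Gamma n eta 0 = setQ' n eta"
    proof
      show "Gamma n eta 0 \<subseteq> setQ' n eta"
      proof (cases "n = 4")
        case True thus ?thesis using n4_G0 by blast
      next
        case False
        with h have "n \<ge> 5" by auto
        thus ?thesis using G_0mod4_sub[of 0] h by simp
      qed
      show "setQ' n eta \<subseteq> Gamma n eta 0" using Q'_sub_G[OF en, of 0] by blast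
    qed
    have g2: "Gamma n eta 2 = setQ' n eta"
      using G_0mod4_sub[of 2] h Q'_sub_G[OF en, of 2] by auto
    show "setQ n eta = Gamma n eta 1 \<and> Gamma n eta 1 = Gamma n eta 3 \<and>
       setQ' n eta = Gamma n eta 0 \<and> Gamma n eta 0 = Gamma n eta 2 \<and> setQ n eta \<noteq> setQ' n eta"
      using G1_eq G3_eq[of] h g0 g2 Q_ne_Q'[of] by auto
  qed
  have c2: "n \<ge> 4 \<and> n mod 4 \<in> {1, 2, 3} \<longrightarrow>
       setQ n eta = Gamma n eta 0 \<and> Gamma n eta 0 = Gamma n eta 1 \<and>
       Gamma n eta 1 = Gamma n eta 2 \<and> Gamma n eta 2 = Gamma n eta 3"
  proof
    assume h: "n \<ge> 4 \<and> n mod 4 \<in> {1, 2, 3}"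
    have g02: "Gamma n eta 0 = setQ n eta \<and> Gamma n eta 2 = setQ n eta"
    proof (cases "odd n")
      case True
      with h have "n \<ge> 5" by (cases "n = 4") auto
      thus ?thesis using G0_odd G2_odd True by auto
    next
      case False
      have "n mod 4 = 1 \<or> n mod 4 = 2 \<or> n mod 4 = 3" using h by auto
      hence "n mod 4 = 2" using False by presburger
      moreover have "n \<ge> 5" using h \<open>n mod 4 = 2\<close> by (cases "n = 4") auto
      ultimately show ?thesis using G_2mod4 by auto
    qed
    thus "setQ n eta = Gamma n eta 0 \<and> Gamma n eta 0 = Gamma n eta 1 \<and>
       Gamma n eta 1 = Gamma n eta 2 \<and> Gamma n eta 2 = Gamma n eta 3"
      using G1_eq G3_eq h by auto
  qed
  have c3: "n = 2 \<longrightarrow>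
       Gamma n eta 0 = clunits n eta (clalg n) \<and>
       Gamma n eta 1 = Gamma n eta 2 \<and> Gamma n eta 2 = setQ n eta \<and>
       setQ n eta = setP n eta \<and>
       setP n eta = clunits n eta (cleven n) \<union> clunits n eta (clodd n) \<and>
       clunits n eta (cleven n) \<union> clunits n eta (clodd n) \<noteq> clunits n eta (clalg n)"
  proof
    assume n: "n = 2"
    have en: "even n" using n by simp
    have g2: "Gamma n eta 2 = setQ n eta" using G_2mod4[of 2] n by simp
    have PQ: "setQ n eta = setP n eta" using Q_sub_P P_sub_Q_small n by (simp add: subset_antisym)
    have PE: "setP n eta = clunits n eta (cleven n) \<union> clunits n eta (clodd n)"
    proof
      show "setP n eta \<subseteq> clunits n eta (cleven n) \<union> clunits n eta (clodd n)" using setP_even_n[OF en] by blast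
      show "clunits n eta (cleven n) \<union> clunits n eta (clodd n) \<subseteq> setP n eta"
        using evenodd_setP by (auto simp: units_iff)
    qed
    show "Gamma n eta 0 = clunits n eta (clalg n) \<and>
       Gamma n eta 1 = Gamma n eta 2 \<and> Gamma n eta 2 = setQ n eta \<and>
       setQ n eta = setP n eta \<and>
       setP n eta = clunits n eta (cleven n) \<union> clunits n eta (clodd n) \<and>
       clunits n eta (cleven n) \<union> clunits n eta (clodd n) \<noteq> clunits n eta (clalg n)"
      using G0_small n G1_eq g2 PQ PE n2_ne by auto
  qed
  have c4: "n = 3 \<longrightarrow>
       Gamma n eta 0 = clunits n eta (clalg n) \<and> Gamma n eta 3 = clunits n eta (clalg n) \<and>
       Gamma n eta 1 = Gamma n eta 2 \<and> Gamma n eta 2 = setQ n eta \<and>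
       setQ n eta = setP n eta \<and>
       setP n eta = {clmul n eta W T | W T. W \<in> clunits n eta (clcenter n) \<and> T \<in> clunits n eta (cleven n)} \<and>
       {clmul n eta W T | W T. W \<in> clunits n eta (clcenter n) \<and> T \<in> clunits n eta (cleven n)}
          \<noteq> clunits n eta (clalg n)"
  proof
    assume n: "n = 3"
    have on: "odd n" using n by simp
    have PQ: "setQ n eta = setP n eta" using Q_sub_P P_sub_Q_small n by (simp add: subset_antisym)
    show "Gamma n eta 0 = clunits n eta (clalg n) \<and> Gamma n eta 3 = clunits n eta (clalg n) \<and>
       Gamma n eta 1 = Gamma n eta 2 \<and> Gamma n eta 2 = setQ n eta \<and>
       setQ n eta = setP n eta \<and>
       setP n eta = {clmul n eta W T | W T. W \<in> clunits n eta (clcenter n) \<and> T \<in> clunits n eta (cleven n)} \<and>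
       {clmul n eta W T | W T. W \<in> clunits n eta (clcenter n) \<and> T \<in> clunits n eta (cleven n)}
          \<noteq> clunits n eta (clalg n)"
      using G0_small n G3_n3 G1_eq G2_odd[OF on] PQ n3_setP[OF on] n3_ne[OF on] by auto
  qed
  have c5: "n \<ge> 2 \<longrightarrow>
       (\<forall>k\<in>{0, 1, 2, 3}. Gamma n eta 1 \<subseteq> Gamma n eta k) \<and>
       Gamma n eta 1 = setQ n eta \<and>
       setQ n eta = {T \<in> clunits n eta (clalg n). \<forall>k\<in>{0, 1, 2, 3}. \<forall>X \<in> grmod4 n k.
           clmul n eta (clmul n eta T X) (clinv n eta T) \<in> grmod4 n k}"
  proof
    have sub: "setQ n eta \<subseteq> Gamma n eta k" if "k \<in> {0,1,2,3}" for k
      using Q_sub_Gamma[of k] that by auto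
    have e: "setQ n eta = {T \<in> clunits n eta (clalg n). \<forall>k\<in>{0, 1, 2, 3}. \<forall>X \<in> grmod4 n k.
           clmul n eta (clmul n eta T X) (clinv n eta T) \<in> grmod4 n k}"
    proof
      show "setQ n eta \<subseteq> {T \<in> clunits n eta (clalg n). \<forall>k\<in>{0, 1, 2, 3}. \<forall>X \<in> grmod4 n k.
           clmul n eta (clmul n eta T X) (clinv n eta T) \<in> grmod4 n k}"
        using sub by (auto simp: Gamma_def)
      show "{T \<in> clunits n eta (clalg n). \<forall>k\<in>{0, 1, 2, 3}. \<forall>X \<in> grmod4 n k.
           clmul n eta (clmul n eta T X) (clinv n eta T) \<in> grmod4 n k} \<subseteq> setQ n eta"
        using G1_eq by (auto simp: Gamma_def)
    qed
    show "(\<forall>k\<in>{0, 1, 2, 3}. Gamma n eta 1 \<subseteq> Gamma n eta k) \<and> Gamma n eta 1 = setQ n eta \<and>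
       setQ n eta = {T \<in> clunits n eta (clalg n). \<forall>k\<in>{0, 1, 2, 3}. \<forall>X \<in> grmod4 n k.
           clmul n eta (clmul n eta T X) (clinv n eta T) \<in> grmod4 n k}"
      using sub G1_eq e by auto
  qed
  show ?thesis unfolding gamma_claims_def using c1 c2 c3 c4 c5 by blast
qed

end

theorem mainTheorem11:
  fixes p q n :: nat
  assumes "n \<ge> 2"
  shows "(p + q = n \<longrightarrow> gamma_claims n (sig_pq p)) \<and> gamma_claims n (\<lambda>_. (1::complex))"
proof -
  interpret r: clf2 n "sig_pq p" by unfold_locales (auto simp: sig_pq_def assms)
  interpret c: clf2 n "\<lambda>_. (1::complex)" by unfold_locales (auto simp: assms)
  show ?thesis using r.claims c.claims by blast
qed


end
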